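(* Let $m,\ell\ge1$ and $n=m\ell$. The number of $(m+2)$-angulations of the once-punctured polygon $P_n^\bullet$ is $m\binom{n+\ell-1}{n}=\binom{n+\ell-1}{\ell}$.
   Context: $P_n^\bullet$ is a disc with $n$ marked points $v_0,\ldots,v_{n-1}$ on its boundary and one marked point $\bullet$ (the puncture) in its interior. An arc is a non-self-intersecting curve with endpoints at marked points, interior avoiding marked points, up to isotopy, not isotopic to a boundary segment or contractible; arcs are non-crossing if they have non-crossing representatives. For $m\ge1$, an $(m+2)$-angulation of $P_n^\bullet$ is a set $T$ of pairwise non-crossing arcs such that every connected component of $P_n^\bullet\setminus T$ is an $(m+2)$-gon (sides counted with multiplicity). *)

theory Defs
  imports Main
begin

text \<open>
Combinatorial model of the once-punctured polygon P_n with boundary marked points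
v_0,...,v_{n-1} (in counterclockwise order) and a puncture.

Isotopy classes of arcs:
  Punct i     : the arc from v_i to the puncture (i < n);
  Bdry i d    : the arc from v_i to v_{(i+d) mod n} (2 <= d <= n) which, together with
                the boundary path v_i, v_{i+1}, ..., v_{i+d} (indices mod n), bounds a disc
                not containing the puncture.  Bdry i n is the loop at v_i around the puncture;
                d = 1 would be a boundary segment and d = 0 a contractible loop, both excluded.

Crossing and faces are described in the universal-cover picture: the boundary marked
points lift to the integers (v_i to all i + k*n), the puncture lifts to a single ideal point
Inf, a boundary arc Bdry i d lifts to the chords (i+kn, i+d+kn), a puncture arc to the
rays (i+kn, Inf).  Boundary segments lift to the edges (a, a+1).
\<close>

datatype arc = Punct nat | Bdry nat nat

definition valid_arc :: "nat \<Rightarrow> arc \<Rightarrow> bool" where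
  "valid_arc n \<alpha> = (case \<alpha> of
      Punct i \<Rightarrow> i < n
    | Bdry i d \<Rightarrow> i < n \<and> 2 \<le> d \<and> d \<le> n)"

datatype lv = Fin int | Inf

fun lv_less :: "lv \<Rightarrow> lv \<Rightarrow> bool" where
  "lv_less (Fin a) (Fin b) = (a < b)"
| "lv_less (Fin a) Inf = True"
| "lv_less Inf _ = False"

fun lift :: "nat \<Rightarrow> arc \<Rightarrow> (lv \<times> lv) set" where
  "lift n (Punct i) = {(Fin (int i + k * int n), Inf) | k. True}"
| "lift n (Bdry i d) = {(Fin (int i + k * int n), Fin (int i + int d + k * int n)) | k. True}"

definition lifts :: "nat \<Rightarrow> arc set \<Rightarrow> (lv \<times> lv) set" where
  "lifts n T = (\<Union>\<alpha>\<in>T. lift n \<alpha>)"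

fun lcross :: "lv \<times> lv \<Rightarrow> lv \<times> lv \<Rightarrow> bool" where
  "lcross (Fin a, Fin b) (Fin c, Fin d) = ((a < c \<and> c < b \<and> b < d) \<or> (c < a \<and> a < d \<and> d < b))"
| "lcross (Fin a, Fin b) (Fin c, Inf) = (a < c \<and> c < b)"
| "lcross (Fin c, Inf) (Fin a, Fin b) = (a < c \<and> c < b)"
| "lcross _ _ = False"

text \<open>Two arcs are non-crossing iff no lifts of them cross (this also covers self-crossings).\<close>
definition noncrossing :: "nat \<Rightarrow> arc set \<Rightarrow> bool" where
  "noncrossing n T = (\<forall>\<alpha>\<in>T. \<forall>\<beta>\<in>T. \<forall>p\<in>lift n \<alpha>. \<forall>q\<in>lift n \<beta>. \<not> lcross p q)"

definition is_side :: "nat \<Rightarrow> arc set \<Rightarrow> lv \<Rightarrow> lv \<Rightarrow> bool" where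
  "is_side n T x y = ((\<exists>a. x = Fin a \<and> y = Fin (a + 1)) \<or> (x, y) \<in> lifts n T)"

text \<open>Each polygonal component of the complement of T lifts to such a polygon, with the
  same number of sides counted with multiplicity (e.g. a self-folded triangle lifts to a
  triangle).\<close>
definition is_face :: "nat \<Rightarrow> arc set \<Rightarrow> lv list \<Rightarrow> bool" where
  "is_face n T xs =
     (3 \<le> length xs \<and> sorted_wrt lv_less xs \<and>
      (\<forall>i. i + 1 < length xs \<longrightarrow> is_side n T (xs ! i) (xs ! (i + 1))) \<and>
      is_side n T (hd xs) (last xs) \<and>
      (\<forall>i j. i + 1 < j \<and> j < length xs \<and> \<not> (i = 0 \<and> j = length xs - 1)
              \<longrightarrow> (xs ! i, xs ! j) \<notin> lifts n T))"

text \<open>If no arc of T ends at the puncture, the component containing the puncture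
  is a punctured region, not a polygon; otherwise every component is a polygon and these are
  exactly the faces above.\<close>
definition is_angulation :: "nat \<Rightarrow> nat \<Rightarrow> arc set \<Rightarrow> bool" where
  "is_angulation m n T =
     ((\<forall>\<alpha>\<in>T. valid_arc n \<alpha>) \<and> noncrossing n T \<and>
      (\<exists>i. Punct i \<in> T) \<and>
      (\<forall>xs. is_face n T xs \<longrightarrow> length xs = m + 2))"

end

theory Submission
  imports Defs "HOL-Library.Multiset"
begin


definition validT :: "nat \<Rightarrow> arc set \<Rightarrow> bool" where
  "validT n T = (\<forall>\<alpha>\<in>T. valid_arc n \<alpha>)"

definition chord :: "nat \<Rightarrow> arc set \<Rightarrow> int \<Rightarrow> int \<Rightarrow> bool" where
  "chord n T x y \<longleftrightarrow> x < y \<and> Bdry (nat (x mod int n)) (nat (y - x)) \<in> T"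

definition ray :: "nat \<Rightarrow> arc set \<Rightarrow> int \<Rightarrow> bool" where
  "ray n T x \<longleftrightarrow> Punct (nat (x mod int n)) \<in> T"

lemma lifts_shape: "P \<in> lifts n T \<Longrightarrow> (\<exists>a b. P = (Fin a, Fin b)) \<or> (\<exists>a. P = (Fin a, Inf))"
proof -
  assume "P \<in> lifts n T"
  then obtain \<alpha> where "P \<in> lift n \<alpha>" unfolding lifts_def by auto
  then show ?thesis by (cases \<alpha>) auto
qed

lemma lifts_I: "(Inf, y) \<notin> lifts n T"
  using lifts_shape by blast

lemma mod_eq_nat: "0 < n \<Longrightarrow> i < n \<Longrightarrow> (int i + k * int n) mod int n = int i"
  by (simp add: mod_pos_pos_trivial)

lemma lifts_FF:
  assumes "validT n T" "0 < n"
  shows "(Fin x, Fin y) \<in> lifts n T \<longleftrightarrow> chord n T x y"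
proof
  assume "(Fin x, Fin y) \<in> lifts n T"
  then obtain \<alpha> where a: "\<alpha> \<in> T" "(Fin x, Fin y) \<in> lift n \<alpha>" unfolding lifts_def by auto
  then obtain i d where ad: "\<alpha> = Bdry i d" by (cases \<alpha>) auto
  then obtain k where k: "x = int i + k * int n" "y = int i + int d + k * int n" using a by auto
  have v: "i < n" "2 \<le> d" using a assms ad unfolding validT_def valid_arc_def by auto
  have "x mod int n = int i" using k v assms by (simp add: mod_pos_pos_trivial)
  then show "chord n T x y" unfolding chord_def using a ad k v by auto
next
  assume c: "chord n T x y"
  let ?i = "nat (x mod int n)" and ?d = "nat (y - x)"
  have "(Fin x, Fin y) \<in> lift n (Bdry ?i ?d)"
  proof -
    have "x = int ?i + (x div int n) * int n" using assms by simp
    moreover have "y = int ?i + int ?d + (x div int n) * int n" using assms c unfolding chord_def by simp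
    ultimately have "(Fin x, Fin y) = (Fin (int ?i + (x div int n) * int n), Fin (int ?i + int ?d + (x div int n) * int n))" by simp
    then show ?thesis by (simp only: lift.simps) blast
  qed
  moreover have "Bdry ?i ?d \<in> T" using c unfolding chord_def by auto
  ultimately show "(Fin x, Fin y) \<in> lifts n T" unfolding lifts_def by blast
qed

lemma lifts_FI:
  assumes "validT n T" "0 < n"
  shows "(Fin x, Inf) \<in> lifts n T \<longleftrightarrow> ray n T x"
proof
  assume "(Fin x, Inf) \<in> lifts n T"
  then obtain \<alpha> where a: "\<alpha> \<in> T" "(Fin x, Inf) \<in> lift n \<alpha>" unfolding lifts_def by auto
  then obtain i where ad: "\<alpha> = Punct i" by (cases \<alpha>) auto
  then obtain k where k: "x = int i + k * int n" using a by auto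
  have v: "i < n" using a assms ad unfolding validT_def valid_arc_def by auto
  have "x mod int n = int i" using k v assms by (simp add: mod_pos_pos_trivial)
  then show "ray n T x" unfolding ray_def using a ad k v by auto
next
  assume c: "ray n T x"
  let ?i = "nat (x mod int n)"
  have "(Fin x, Inf) \<in> lift n (Punct ?i)"
  proof -
    have "x = int ?i + (x div int n) * int n" using assms by simp
    then have "(Fin x, Inf) = (Fin (int ?i + (x div int n) * int n), Inf)" by simp
    then show ?thesis by (simp only: lift.simps) blast
  qed
  then show "(Fin x, Inf) \<in> lifts n T" using c unfolding ray_def lifts_def by blast
qed

lemma chord_bounds:
  assumes "validT n T" "0 < n" "chord n T x y"
  shows "x + 2 \<le> y" "y \<le> x + int n"
  using assms unfolding chord_def validT_def valid_arc_def by fastforce+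

lemma noncrossing_lifts: "noncrossing n T \<longleftrightarrow> (\<forall>P\<in>lifts n T. \<forall>Q\<in>lifts n T. \<not> lcross P Q)"
  unfolding noncrossing_def lifts_def by blast

lemma nc_cc:
  assumes "noncrossing n T" "validT n T" "0 < n" "chord n T a b" "chord n T p q"
  shows "\<not> (a < p \<and> p < b \<and> b < q)"
proof -
  have "(Fin a, Fin b) \<in> lifts n T" "(Fin p, Fin q) \<in> lifts n T" using assms lifts_FF[OF assms(2,3)] by auto
  then have "\<not> lcross (Fin a, Fin b) (Fin p, Fin q)" using assms(1) noncrossing_lifts[of n T] by blast
  then show ?thesis by auto
qed

lemma nc_cr:
  assumes "noncrossing n T" "validT n T" "0 < n" "chord n T a b" "ray n T p"
  shows "\<not> (a < p \<and> p < b)"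
proof -
  have "(Fin a, Fin b) \<in> lifts n T" "(Fin p, Inf) \<in> lifts n T" using assms lifts_FF[OF assms(2,3)] lifts_FI[OF assms(2,3)] by auto
  then have "\<not> lcross (Fin a, Fin b) (Fin p, Inf)" using assms(1) noncrossing_lifts[of n T] by blast
  then show ?thesis by auto
qed

lemma nc_intro:
  assumes "validT n T" "0 < n"
    and cc: "\<And>a b p q. chord n T a b \<Longrightarrow> chord n T p q \<Longrightarrow> \<not> (a < p \<and> p < b \<and> b < q)"
    and cr: "\<And>a b p. chord n T a b \<Longrightarrow> ray n T p \<Longrightarrow> \<not> (a < p \<and> p < b)"
  shows "noncrossing n T"
  unfolding noncrossing_lifts
proof (intro ballI)
  fix P Q assume P: "P \<in> lifts n T" and Q: "Q \<in> lifts n T"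
  from lifts_shape[OF P] lifts_shape[OF Q] show "\<not> lcross P Q"
  proof (elim disjE exE)
    fix a b c d assume e: "P = (Fin a, Fin b)" "Q = (Fin c, Fin d)"
    then have "chord n T a b" "chord n T c d" using P Q lifts_FF[OF assms(1,2)] by auto
    then show ?thesis using e cc by fastforce
  next
    fix a b c assume e: "P = (Fin a, Fin b)" "Q = (Fin c, Inf)"
    then have "chord n T a b" "ray n T c" using P Q lifts_FF[OF assms(1,2)] lifts_FI[OF assms(1,2)] by auto
    then show ?thesis using e cr by fastforce
  next
    fix a c d assume e: "P = (Fin a, Inf)" "Q = (Fin c, Fin d)"
    then have "chord n T c d" "ray n T a" using P Q lifts_FF[OF assms(1,2)] lifts_FI[OF assms(1,2)] by auto
    then show ?thesis using e cr by fastforce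
  next
    fix a c assume e: "P = (Fin a, Inf)" "Q = (Fin c, Inf)"
    then show ?thesis by simp
  qed
qed



definition side :: "nat \<Rightarrow> arc set \<Rightarrow> int \<Rightarrow> int \<Rightarrow> bool" where
  "side n T x y \<longleftrightarrow> y = x + 1 \<or> chord n T x y"

lemma is_side_FF: "validT n T \<Longrightarrow> 0 < n \<Longrightarrow> is_side n T (Fin x) (Fin y) \<longleftrightarrow> side n T x y"
  unfolding is_side_def side_def using lifts_FF by auto

lemma is_side_FI: "validT n T \<Longrightarrow> 0 < n \<Longrightarrow> is_side n T (Fin x) Inf \<longleftrightarrow> ray n T x"
  unfolding is_side_def using lifts_FI by auto

lemma sorted_lv_shape: "sorted_wrt lv_less xs \<Longrightarrow> (\<exists>ys. xs = map Fin ys) \<or> (\<exists>ys. xs = map Fin ys @ [Inf])"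
proof (induction xs)
  case Nil then show ?case by auto
next
  case (Cons x xs)
  then have IH: "(\<exists>ys. xs = map Fin ys) \<or> (\<exists>ys. xs = map Fin ys @ [Inf])" by auto
  show ?case
  proof (cases x)
    case (Fin a)
    from IH show ?thesis
    proof
      assume "\<exists>ys. xs = map Fin ys" then obtain ys where "xs = map Fin ys" by blast
      then have "x # xs = map Fin (a # ys)" using Fin by simp
      then show ?thesis by (intro disjI1) (rule exI)
    next
      assume "\<exists>ys. xs = map Fin ys @ [Inf]" then obtain ys where "xs = map Fin ys @ [Inf]" by blast
      then have "x # xs = map Fin (a # ys) @ [Inf]" using Fin by simp
      then show ?thesis by (intro disjI2) (rule exI)
    qed
  next
    case Inf
    then have "xs = []" using Cons.prems by (cases xs) auto
    then have "x # xs = map Fin [] @ [Inf]" using Inf by simp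
    then show ?thesis by (intro disjI2) (rule exI)
  qed
qed

lemma sorted_map_Fin: "sorted_wrt lv_less (map Fin ys) \<longleftrightarrow> sorted_wrt (<) ys"
  by (simp add: sorted_wrt_map)

lemma sorted_map_Fin_Inf: "sorted_wrt lv_less (map Fin ys @ [Inf]) \<longleftrightarrow> sorted_wrt (<) ys"
  by (simp add: sorted_wrt_append sorted_wrt_map)

definition cface :: "nat \<Rightarrow> arc set \<Rightarrow> int list \<Rightarrow> bool" where
  "cface n T ys \<longleftrightarrow> 3 \<le> length ys \<and> sorted_wrt (<) ys \<and>
     (\<forall>i. i + 1 < length ys \<longrightarrow> side n T (ys ! i) (ys ! (i + 1))) \<and>
     side n T (hd ys) (last ys) \<and>
     (\<forall>i j. i + 1 < j \<and> j < length ys \<and> \<not> (i = 0 \<and> j = length ys - 1) \<longrightarrow> \<not> chord n T (ys ! i) (ys ! j))"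

definition rface :: "nat \<Rightarrow> arc set \<Rightarrow> int list \<Rightarrow> bool" where
  "rface n T ys \<longleftrightarrow> 2 \<le> length ys \<and> sorted_wrt (<) ys \<and>
     (\<forall>i. i + 1 < length ys \<longrightarrow> side n T (ys ! i) (ys ! (i + 1))) \<and>
     ray n T (last ys) \<and> ray n T (hd ys) \<and>
     (\<forall>i j. i + 1 < j \<and> j < length ys \<longrightarrow> \<not> chord n T (ys ! i) (ys ! j)) \<and>
     (\<forall>i. 0 < i \<and> i + 1 < length ys \<longrightarrow> \<not> ray n T (ys ! i))"

lemma is_face_cface:
  assumes "validT n T" "0 < n"
  shows "is_face n T (map Fin ys) \<longleftrightarrow> cface n T ys"
proof -
  have A: "(\<forall>i. i + 1 < length (map Fin ys) \<longrightarrow> is_side n T (map Fin ys ! i) (map Fin ys ! (i + 1)))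
      \<longleftrightarrow> (\<forall>i. i + 1 < length ys \<longrightarrow> side n T (ys ! i) (ys ! (i + 1)))"
    using is_side_FF[OF assms] by auto
  have B: "ys \<noteq> [] \<Longrightarrow> is_side n T (hd (map Fin ys)) (last (map Fin ys)) \<longleftrightarrow> side n T (hd ys) (last ys)"
    using is_side_FF[OF assms] by (simp add: hd_map last_map)
  have C: "(\<forall>i j. i + 1 < j \<and> j < length (map Fin ys) \<and> \<not> (i = 0 \<and> j = length (map Fin ys) - 1)
              \<longrightarrow> (map Fin ys ! i, map Fin ys ! j) \<notin> lifts n T)
     \<longleftrightarrow> (\<forall>i j. i + 1 < j \<and> j < length ys \<and> \<not> (i = 0 \<and> j = length ys - 1) \<longrightarrow> \<not> chord n T (ys ! i) (ys ! j))"
    using lifts_FF[OF assms] by auto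
  show ?thesis unfolding is_face_def cface_def sorted_map_Fin A C
    using B by (cases "ys = []") auto
qed

lemma nth_app_Inf: "i < length ys \<Longrightarrow> (map Fin ys @ [Inf]) ! i = Fin (ys ! i)"
  by (simp add: nth_append)

lemma nth_app_Inf2: "(map Fin ys @ [Inf]) ! (length ys) = Inf"
  by (simp add: nth_append)

lemma is_face_rface:
  assumes "validT n T" "0 < n"
  shows "is_face n T (map Fin ys @ [Inf]) \<longleftrightarrow> rface n T ys"
proof -
  let ?xs = "map Fin ys @ [Inf]"
  have len: "length ?xs = length ys + 1" by simp
  have A: "(\<forall>i. i + 1 < length ?xs \<longrightarrow> is_side n T (?xs ! i) (?xs ! (i + 1)))
      \<longleftrightarrow> (\<forall>i. i + 1 < length ys \<longrightarrow> side n T (ys ! i) (ys ! (i + 1))) \<and> (ys \<noteq> [] \<longrightarrow> ray n T (last ys))"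
  proof
    assume h: "\<forall>i. i + 1 < length ?xs \<longrightarrow> is_side n T (?xs ! i) (?xs ! (i + 1))"
    have 1: "\<forall>i. i + 1 < length ys \<longrightarrow> side n T (ys ! i) (ys ! (i + 1))"
    proof (intro allI impI)
      fix i assume "i + 1 < length ys"
      then show "side n T (ys ! i) (ys ! (i + 1))"
        using h[rule_format, of i] is_side_FF[OF assms] by (simp add: nth_app_Inf)
    qed
    have 2: "ys \<noteq> [] \<longrightarrow> ray n T (last ys)"
    proof
      assume ne: "ys \<noteq> []"
      then have "is_side n T (?xs ! (length ys - 1)) (?xs ! (length ys))"
        using h[rule_format, of "length ys - 1"] by simp
      then show "ray n T (last ys)" using ne is_side_FI[OF assms]
        by (simp add: nth_app_Inf2 nth_app_Inf last_conv_nth)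
    qed
    show "(\<forall>i. i + 1 < length ys \<longrightarrow> side n T (ys ! i) (ys ! (i + 1))) \<and> (ys \<noteq> [] \<longrightarrow> ray n T (last ys))"
      using 1 2 by blast
  next
    assume h: "(\<forall>i. i + 1 < length ys \<longrightarrow> side n T (ys ! i) (ys ! (i + 1))) \<and> (ys \<noteq> [] \<longrightarrow> ray n T (last ys))"
    show "\<forall>i. i + 1 < length ?xs \<longrightarrow> is_side n T (?xs ! i) (?xs ! (i + 1))"
    proof (intro allI impI)
      fix i assume i: "i + 1 < length ?xs"
      show "is_side n T (?xs ! i) (?xs ! (i + 1))"
      proof (cases "i + 1 < length ys")
        case True then show ?thesis using h is_side_FF[OF assms] by (simp add: nth_app_Inf)
      next
        case False
        then have ii: "i = length ys - 1" "length ys \<noteq> 0" using i by auto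
        then have "?xs ! i = Fin (last ys)" "?xs ! (i + 1) = Inf"
          using ii by (simp_all add: nth_app_Inf nth_app_Inf2 last_conv_nth)
        then show ?thesis using h is_side_FI[OF assms] ii by auto
      qed
    qed
  qed
  have B: "ys \<noteq> [] \<Longrightarrow> is_side n T (hd ?xs) (last ?xs) \<longleftrightarrow> ray n T (hd ys)"
    using is_side_FI[OF assms] by (cases ys) auto
  have C: "(\<forall>i j. i + 1 < j \<and> j < length ?xs \<and> \<not> (i = 0 \<and> j = length ?xs - 1)
              \<longrightarrow> (?xs ! i, ?xs ! j) \<notin> lifts n T)
     \<longleftrightarrow> (\<forall>i j. i + 1 < j \<and> j < length ys \<longrightarrow> \<not> chord n T (ys ! i) (ys ! j)) \<and>
         (\<forall>i. 0 < i \<and> i + 1 < length ys \<longrightarrow> \<not> ray n T (ys ! i))"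
  proof
    assume h: "\<forall>i j. i + 1 < j \<and> j < length ?xs \<and> \<not> (i = 0 \<and> j = length ?xs - 1)
              \<longrightarrow> (?xs ! i, ?xs ! j) \<notin> lifts n T"
    have 1: "\<forall>i j. i + 1 < j \<and> j < length ys \<longrightarrow> \<not> chord n T (ys ! i) (ys ! j)"
    proof (intro allI impI)
      fix i j assume ij: "i + 1 < j \<and> j < length ys"
      then show "\<not> chord n T (ys ! i) (ys ! j)" using h[rule_format, of i j] lifts_FF[OF assms]
        by (simp add: nth_app_Inf)
    qed
    have 2: "\<forall>i. 0 < i \<and> i + 1 < length ys \<longrightarrow> \<not> ray n T (ys ! i)"
    proof (intro allI impI)
      fix i assume ij: "0 < i \<and> i + 1 < length ys"
      then show "\<not> ray n T (ys ! i)" using h[rule_format, of i "length ys"] lifts_FI[OF assms]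
        by (simp add: nth_app_Inf nth_app_Inf2)
    qed
    show "(\<forall>i j. i + 1 < j \<and> j < length ys \<longrightarrow> \<not> chord n T (ys ! i) (ys ! j)) \<and>
         (\<forall>i. 0 < i \<and> i + 1 < length ys \<longrightarrow> \<not> ray n T (ys ! i))" using 1 2 by blast
  next
    assume h: "(\<forall>i j. i + 1 < j \<and> j < length ys \<longrightarrow> \<not> chord n T (ys ! i) (ys ! j)) \<and>
         (\<forall>i. 0 < i \<and> i + 1 < length ys \<longrightarrow> \<not> ray n T (ys ! i))"
    show "\<forall>i j. i + 1 < j \<and> j < length ?xs \<and> \<not> (i = 0 \<and> j = length ?xs - 1)
              \<longrightarrow> (?xs ! i, ?xs ! j) \<notin> lifts n T"
    proof (intro allI impI)
      fix i j assume ij: "i + 1 < j \<and> j < length ?xs \<and> \<not> (i = 0 \<and> j = length ?xs - 1)"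
      show "(?xs ! i, ?xs ! j) \<notin> lifts n T"
      proof (cases "j < length ys")
        case True then show ?thesis using h ij lifts_FF[OF assms] by (simp add: nth_app_Inf)
      next
        case False
        then have "j = length ys" using ij by simp
        then show ?thesis using h ij lifts_FI[OF assms] by (simp add: nth_app_Inf nth_app_Inf2)
      qed
    qed
  qed
  show ?thesis unfolding is_face_def A C
    using B len sorted_map_Fin_Inf[of ys] unfolding rface_def by (cases "ys = []") auto
qed



definition K :: "nat \<Rightarrow> arc set \<Rightarrow> int \<Rightarrow> int \<Rightarrow> nat" where
  "K n T x y = (if ray n T x then 1 else 0) + card {q. chord n T x q \<and> y < q}"

definition cnt :: "nat \<Rightarrow> arc set \<Rightarrow> int \<Rightarrow> nat" where
  "cnt n T x = (if ray n T x then 1 else 0) + card {q. chord n T x q}"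

lemma finite_chords: "validT n T \<Longrightarrow> 0 < n \<Longrightarrow> finite {q. chord n T x q}"
proof -
  assume a: "validT n T" "0 < n"
  have "{q. chord n T x q} \<subseteq> {x .. x + int n}" using chord_bounds[OF a] by fastforce
  then show ?thesis by (rule finite_subset) simp
qed

lemma finite_chords': "validT n T \<Longrightarrow> 0 < n \<Longrightarrow> finite {q. chord n T x q \<and> P q}"
  by (rule finite_subset[OF _ finite_chords]) auto

lemma K_unit: "validT n T \<Longrightarrow> 0 < n \<Longrightarrow> K n T x (x + 1) = cnt n T x"
proof -
  assume a: "validT n T" "0 < n"
  have "{q. chord n T x q \<and> x + 1 < q} = {q. chord n T x q}" using chord_bounds[OF a] by force
  then show ?thesis unfolding K_def cnt_def by simp
qed

lemma sorted_nth_less: "sorted_wrt (<) (ys :: int list) \<Longrightarrow> i < j \<Longrightarrow> j < length ys \<Longrightarrow> ys ! i < ys ! j"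
  by (simp add: sorted_wrt_iff_nth_less)

lemma sorted_nth_less_iff: "sorted_wrt (<) (ys :: int list) \<Longrightarrow> i < length ys \<Longrightarrow> j < length ys \<Longrightarrow> ys ! i < ys ! j \<longleftrightarrow> i < j"
  by (metis linorder_neqE_nat order_less_asym sorted_nth_less)

lemma sorted_between:
  "sorted_wrt (<) (ys :: int list) \<Longrightarrow> ys \<noteq> [] \<Longrightarrow> hd ys \<le> q \<Longrightarrow> q \<le> last ys \<Longrightarrow>
    q \<in> set ys \<or> (\<exists>s. s + 1 < length ys \<and> ys ! s < q \<and> q < ys ! (s + 1))"
proof (induction ys)
  case Nil then show ?case by simp
next
  case (Cons y ys)
  show ?case
  proof (cases "q = y")
    case True then show ?thesis by simp
  next
    case False
    then have qy: "y < q" using Cons.prems by simp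
    then have ne: "ys \<noteq> []" using Cons.prems by auto
    show ?thesis
    proof (cases "q < hd ys")
      case True
      then have "0 + 1 < length (y # ys) \<and> (y # ys) ! 0 < q \<and> q < (y # ys) ! (0 + 1)"
        using qy ne by (simp add: hd_conv_nth)
      then show ?thesis by blast
    next
      case False
      then have "q \<in> set ys \<or> (\<exists>s. s + 1 < length ys \<and> ys ! s < q \<and> q < ys ! (s + 1))"
        using Cons ne by auto
      then show ?thesis
      proof
        assume "\<exists>s. s + 1 < length ys \<and> ys ! s < q \<and> q < ys ! (s + 1)"
        then obtain s where "s + 1 < length ys \<and> ys ! s < q \<and> q < ys ! (s + 1)" by blast
        then have "Suc s + 1 < length (y # ys) \<and> (y # ys) ! Suc s < q \<and> q < (y # ys) ! (Suc s + 1)" by simp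
        then show ?thesis by blast
      qed simp
    qed
  qed
qed

lemma hd_nth0: "ys \<noteq> [] \<Longrightarrow> hd ys = ys ! 0" by (simp add: hd_conv_nth)
lemma last_nth: "ys \<noteq> [] \<Longrightarrow> last ys = ys ! (length ys - 1)" by (simp add: last_conv_nth)

lemma escape:
  assumes v: "validT n T" "0 < n" and nc: "noncrossing n T"
    and so: "sorted_wrt (<) ys"
    and sides: "\<forall>i. i + 1 < length ys \<longrightarrow> side n T (ys ! i) (ys ! (i + 1))"
    and t: "t + 1 < length ys" and ch: "chord n T (ys ! t) q" and q1: "ys ! (t + 1) < q" and q2: "q \<le> last ys"
  shows "\<exists>j. t + 1 < j \<and> j < length ys \<and> q = ys ! j"
proof -
  have ne: "ys \<noteq> []" using t by auto
  have "hd ys \<le> q" using q1 sorted_nth_less[OF so, of 0 "t+1"] t hd_nth0[OF ne] by auto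
  from sorted_between[OF so ne this q2] show ?thesis
  proof
    assume "q \<in> set ys"
    then obtain j where j: "j < length ys" "q = ys ! j" by (auto simp: in_set_conv_nth)
    then have "t + 1 < j" using q1 sorted_nth_less_iff[OF so] t by auto
    then show ?thesis using j by blast
  next
    assume "\<exists>s. s + 1 < length ys \<and> ys ! s < q \<and> q < ys ! (s + 1)"
    then obtain s where s: "s + 1 < length ys" "ys ! s < q" "q < ys ! (s + 1)" by blast
    have "t < s"
    proof (rule ccontr)
      assume "\<not> t < s"
      then have "ys ! (s + 1) \<le> ys ! (t + 1)" using sorted_nth_less[OF so, of "s+1" "t+1"] t by fastforce
      then show False using s q1 by simp
    qed
    then have ts: "ys ! t < ys ! s" using sorted_nth_less[OF so] s by simp
    have "ys ! (s + 1) \<noteq> ys ! s + 1" using s by simp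
    then have "chord n T (ys ! s) (ys ! (s + 1))" using sides s unfolding side_def by auto
    then show ?thesis using nc_cc[OF nc v ch] ts s by auto
  qed
qed

lemma cface_chord:
  assumes "cface n T ys" shows "chord n T (hd ys) (last ys)"
proof -
  have so: "sorted_wrt (<) ys" and l: "3 \<le> length ys" using assms unfolding cface_def by auto
  then have ne: "ys \<noteq> []" by auto
  have "ys ! 0 < ys ! 1" "ys ! 1 < ys ! (length ys - 1)" using sorted_nth_less[OF so] l by auto
  then have "last ys \<noteq> hd ys + 1" using hd_nth0[OF ne] last_nth[OF ne] by auto
  then show ?thesis using assms unfolding cface_def side_def by auto
qed

lemma cface_K:
  assumes v: "validT n T" "0 < n" and nc: "noncrossing n T" and f: "cface n T ys"
  shows "K n T (ys ! 0) (ys ! 1) = K n T (ys ! 0) (last ys) + 1"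
    and "\<And>t. 1 \<le> t \<Longrightarrow> t + 1 < length ys \<Longrightarrow> K n T (ys ! t) (ys ! (t + 1)) = 0"
proof -
  have so: "sorted_wrt (<) ys" and l: "3 \<le> length ys"
    and sides: "\<forall>i. i + 1 < length ys \<longrightarrow> side n T (ys ! i) (ys ! (i + 1))"
    and forb: "\<And>i j. i + 1 < j \<Longrightarrow> j < length ys \<Longrightarrow> \<not> (i = 0 \<and> j = length ys - 1) \<Longrightarrow> \<not> chord n T (ys ! i) (ys ! j)"
    using f unfolding cface_def by auto
  have ne: "ys \<noteq> []" using l by auto
  have top: "chord n T (ys ! 0) (last ys)" using cface_chord[OF f] hd_nth0[OF ne] by simp
  have lastn: "last ys = ys ! (length ys - 1)" using last_nth[OF ne] .
  {
    have "{q. chord n T (ys ! 0) q \<and> ys ! 1 < q} = insert (last ys) {q. chord n T (ys ! 0) q \<and> last ys < q}"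
    proof (intro equalityI subsetI)
      fix q assume "q \<in> {q. chord n T (ys ! 0) q \<and> ys ! 1 < q}"
      then have q: "chord n T (ys ! 0) q" "ys ! 1 < q" by auto
      show "q \<in> insert (last ys) {q. chord n T (ys ! 0) q \<and> last ys < q}"
      proof (cases "last ys < q")
        case True then show ?thesis using q by auto
      next
        case False
        then obtain j where j: "0 + 1 < j" "j < length ys" "q = ys ! j"
          using escape[OF v nc so sides, of 0 q] q l by auto
        have "j = length ys - 1" using forb[of 0 j] j q by auto
        then show ?thesis using j lastn by auto
      qed
    next
      fix q assume "q \<in> insert (last ys) {q. chord n T (ys ! 0) q \<and> last ys < q}"
      moreover have "ys ! 1 < last ys" using sorted_nth_less[OF so, of 1 "length ys - 1"] l lastn by auto
      ultimately show "q \<in> {q. chord n T (ys ! 0) q \<and> ys ! 1 < q}" using top by auto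
    qed
    moreover have "last ys \<notin> {q. chord n T (ys ! 0) q \<and> last ys < q}" by auto
    ultimately have "card {q. chord n T (ys ! 0) q \<and> ys ! 1 < q} = card {q. chord n T (ys ! 0) q \<and> last ys < q} + 1"
      using finite_chords'[OF v] by simp
    then show "K n T (ys ! 0) (ys ! 1) = K n T (ys ! 0) (last ys) + 1" unfolding K_def by simp
  }
  fix t assume t: "1 \<le> t" "t + 1 < length ys"
  have nr: "\<not> ray n T (ys ! t)"
  proof
    assume "ray n T (ys ! t)"
    moreover have "ys ! 0 < ys ! t" "ys ! t < last ys" using sorted_nth_less[OF so] t lastn by auto
    ultimately show False using nc_cr[OF nc v top] by auto
  qed
  have e: "{q. chord n T (ys ! t) q \<and> ys ! (t + 1) < q} = {}"
  proof (rule ccontr)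
    assume "{q. chord n T (ys ! t) q \<and> ys ! (t + 1) < q} \<noteq> {}"
    then obtain q where q: "chord n T (ys ! t) q" "ys ! (t + 1) < q" by auto
    show False
    proof (cases "last ys < q")
      case True
      have "ys ! 0 < ys ! t" "ys ! t < last ys" using sorted_nth_less[OF so] t lastn by auto
      then show False using nc_cc[OF nc v top q(1)] True by auto
    next
      case False
      then obtain j where j: "t + 1 < j" "j < length ys" "q = ys ! j"
        using escape[OF v nc so sides, of t q] q t by auto
      then show False using forb[of t j] t q by auto
    qed
  qed
  show "K n T (ys ! t) (ys ! (t + 1)) = 0" using nr unfolding K_def e by simp
qed

lemma rface_K:
  assumes v: "validT n T" "0 < n" and nc: "noncrossing n T" and f: "rface n T ys"
  shows "K n T (ys ! 0) (ys ! 1) = 1"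
    and "\<And>t. 1 \<le> t \<Longrightarrow> t + 1 < length ys \<Longrightarrow> K n T (ys ! t) (ys ! (t + 1)) = 0"
proof -
  have so: "sorted_wrt (<) ys" and l: "2 \<le> length ys"
    and sides: "\<forall>i. i + 1 < length ys \<longrightarrow> side n T (ys ! i) (ys ! (i + 1))"
    and forb: "\<And>i j. i + 1 < j \<Longrightarrow> j < length ys \<Longrightarrow> \<not> chord n T (ys ! i) (ys ! j)"
    and nray: "\<And>i. 0 < i \<Longrightarrow> i + 1 < length ys \<Longrightarrow> \<not> ray n T (ys ! i)"
    and rl: "ray n T (last ys)" and rh: "ray n T (hd ys)"
    using f unfolding rface_def by auto
  have ne: "ys \<noteq> []" using l by auto
  have lastn: "last ys = ys ! (length ys - 1)" using last_nth[OF ne] .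
  have esc: "\<And>t q. t + 1 < length ys \<Longrightarrow> chord n T (ys ! t) q \<Longrightarrow> ys ! (t + 1) < q \<Longrightarrow> False"
  proof -
    fix t q assume t: "t + 1 < length ys" and q: "chord n T (ys ! t) q" "ys ! (t + 1) < q"
    show False
    proof (cases "last ys < q")
      case True
      have "ys ! t < last ys" using sorted_nth_less[OF so, of t "length ys - 1"] t lastn by auto
      then show False using nc_cr[OF nc v q(1) rl] True by auto
    next
      case False
      then obtain j where j: "t + 1 < j" "j < length ys" "q = ys ! j"
        using escape[OF v nc so sides, of t q] q t by auto
      then show False using forb[of t j] q by auto
    qed
  qed
  have e0: "{q. chord n T (ys ! 0) q \<and> ys ! 1 < q} = {}" using esc[of 0] l by auto
  show "K n T (ys ! 0) (ys ! 1) = 1" using rh hd_nth0[OF ne] unfolding K_def e0 by simp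
  fix t assume t: "1 \<le> t" "t + 1 < length ys"
  have e1: "{q. chord n T (ys ! t) q \<and> ys ! (t + 1) < q} = {}" using esc[of t] t by auto
  show "K n T (ys ! t) (ys ! (t + 1)) = 0" using nray[of t] t unfolding K_def e1 by simp
qed

lemma telescope:
  fixes W :: "int \<Rightarrow> int" and ys :: "int list"
  assumes law: "\<forall>s. s + 1 < length ys \<longrightarrow> W (ys ! (s + 1)) = W (ys ! s) - 1 + int m * int (K n T (ys ! s) (ys ! (s + 1)))"
    and z: "\<And>s. 1 \<le> s \<Longrightarrow> s + 1 < length ys \<Longrightarrow> K n T (ys ! s) (ys ! (s + 1)) = 0"
  shows "1 \<le> t \<Longrightarrow> t < length ys \<Longrightarrow> W (ys ! t) = W (ys ! 0) - int t + int m * int (K n T (ys ! 0) (ys ! 1))"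
proof (induction t)
  case 0 then show ?case by simp
next
  case (Suc t)
  show ?case
  proof (cases "t = 0")
    case True then show ?thesis using law Suc by auto
  next
    case False
    then have "W (ys ! t) = W (ys ! 0) - int t + int m * int (K n T (ys ! 0) (ys ! 1))" using Suc by auto
    moreover have "W (ys ! (t + 1)) = W (ys ! t) - 1" using law z[of t] Suc False by auto
    ultimately show ?thesis by simp
  qed
qed



definition Wf :: "(int \<Rightarrow> int) \<Rightarrow> int \<Rightarrow> int" where
  "Wf f x = (if 0 \<le> x then (\<Sum>p\<in>{0..<x}. f p) else - (\<Sum>p\<in>{x..<0}. f p))"

lemma Wf_step: "Wf f (x + 1) = Wf f x + f x"
proof (cases "0 \<le> x")
  case True
  have "{0..<x+1} = insert x {0..<x}" using True by auto
  then show ?thesis using True unfolding Wf_def by simp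
next
  case False
  show ?thesis
  proof (cases "x = -1")
    case True
    have "{-1..<0::int} = {-1}" by auto
    then show ?thesis using True unfolding Wf_def by simp
  next
    case F2: False
    have "{x..<0} = insert x {x+1..<0}" using False by auto
    then show ?thesis using False F2 unfolding Wf_def by simp
  qed
qed

lemma Wf_0: "Wf f 0 = 0" unfolding Wf_def by simp

lemma Wf_nat: "Wf f (int k) = (\<Sum>p<k. f (int p))"
proof (induction k)
  case 0 then show ?case by (simp add: Wf_0)
next
  case (Suc k)
  have "Wf f (int (Suc k)) = Wf f (int k) + f (int k)" using Wf_step[of f "int k"] by (simp add: add_ac)
  then show ?case using Suc by simp
qed

lemma Wf_periodic:
  assumes per: "\<And>x. f (x + int n) = f x"
  shows "Wf f (x + int n) - Wf f x = Wf f (int n)"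
proof (induction x rule: int_induct[where k = 0])
  case base then show ?case by (simp add: Wf_0)
next
  case (step1 i)
  have "Wf f (i + 1 + int n) = Wf f (i + int n) + f (i + int n)" using Wf_step[of f "i + int n"] by (simp add: add_ac)
  then show ?case using step1 Wf_step[of f i] per[of i] by simp
next
  case (step2 i)
  have "Wf f (i - 1 + int n + 1) = Wf f (i - 1 + int n) + f (i - 1 + int n)" using Wf_step[of f "i - 1 + int n"] .
  moreover have "Wf f (i - 1 + 1) = Wf f (i - 1) + f (i - 1)" using Wf_step[of f "i - 1"] .
  ultimately show ?case using step2 per[of "i - 1"] by (simp add: add_ac)
qed

definition fpw :: "(int \<Rightarrow> int) \<Rightarrow> int \<Rightarrow> int \<Rightarrow> int" where
  "fpw W x t = x + int (LEAST d::nat. 0 < d \<and> W (x + int d) \<le> t)"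

lemma fpw_props:
  assumes step: "\<And>y. W y - 1 \<le> W (y + 1)" and b0: "x < b0" "W b0 \<le> t" and st: "t < W (x + 1)"
  shows "x + 1 < fpw W x t" "fpw W x t \<le> b0" "W (fpw W x t) = t" "\<And>y. x < y \<Longrightarrow> y < fpw W x t \<Longrightarrow> t < W y"
proof -
  define P where "P = (\<lambda>d::nat. 0 < d \<and> W (x + int d) \<le> t)"
  define d where "d = (LEAST d. P d)"
  have P0: "P (nat (b0 - x))" using b0 unfolding P_def by simp
  have Pd: "P d" unfolding d_def by (rule LeastI[of P, OF P0])
  have dle: "d \<le> nat (b0 - x)" unfolding d_def by (rule Least_le[of P, OF P0])
  have notP: "\<And>e. e < d \<Longrightarrow> \<not> P e" unfolding d_def by (rule not_less_Least)
  have fp: "fpw W x t = x + int d" unfolding fpw_def P_def[symmetric] d_def ..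
  have "d \<noteq> 1" using Pd st unfolding P_def by (auto simp: add_ac)
  then have d2: "d \<ge> 2" using Pd unfolding P_def by auto
  then show "x + 1 < fpw W x t" using fp by simp
  show "fpw W x t \<le> b0" using fp dle b0 by simp
  have below: "\<And>e. 0 < e \<Longrightarrow> e < d \<Longrightarrow> t < W (x + int e)" using notP unfolding P_def by force
  have "t < W (x + int (d - 1))" using below[of "d - 1"] d2 by simp
  moreover have "W (x + int (d - 1)) - 1 \<le> W (x + int d)" using step[of "x + int (d - 1)"] d2
    by (simp add: of_nat_diff add_ac)
  ultimately show "W (fpw W x t) = t" using Pd fp unfolding P_def by simp
  fix y assume y: "x < y" "y < fpw W x t"
  then show "t < W y" using below[of "nat (y - x)"] fp by simp
qed

lemma fpw_le:
  assumes "x < b" "W b \<le> t" shows "fpw W x t \<le> b"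
proof -
  have "(LEAST d::nat. 0 < d \<and> W (x + int d) \<le> t) \<le> nat (b - x)"
    by (rule Least_le) (use assms in simp)
  then show ?thesis unfolding fpw_def using assms by simp
qed

lemma fpw_unique:
  assumes "x < b" "W b \<le> t" "\<And>y. x < y \<Longrightarrow> y < b \<Longrightarrow> t < W y"
  shows "fpw W x t = b"
proof -
  have "(LEAST d::nat. 0 < d \<and> W (x + int d) \<le> t) = nat (b - x)"
  proof (rule Least_equality)
    show "0 < nat (b - x) \<and> W (x + int (nat (b - x))) \<le> t" using assms by simp
  next
    fix e :: nat assume e: "0 < e \<and> W (x + int e) \<le> t"
    show "nat (b - x) \<le> e"
    proof (rule ccontr)
      assume "\<not> nat (b - x) \<le> e"
      then have "x + int e < b" by simp
      then have "t < W (x + int e)" using assms(3)[of "x + int e"] e by simp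
      then show False using e by simp
    qed
  qed
  then show ?thesis unfolding fpw_def using assms by simp
qed



fun st :: "arc \<Rightarrow> nat" where
  "st (Punct i) = i"
| "st (Bdry i d) = i"

definition Phi :: "arc set \<Rightarrow> nat multiset" where
  "Phi T = image_mset st (mset_set T)"

lemma count_Phi: "finite T \<Longrightarrow> count (Phi T) i = card {\<alpha>\<in>T. st \<alpha> = i}"
  unfolding Phi_def count_image_mset by (simp add: vimage_def Int_def conj_commute)

lemma size_Phi: "size (Phi T) = card T"
  unfolding Phi_def by simp

lemma set_Phi: "validT n T \<Longrightarrow> set_mset (Phi T) \<subseteq> {..<n}"
proof
  fix i assume v: "validT n T" and "i \<in># Phi T"
  then obtain \<alpha> where "\<alpha> \<in> T" "i = st \<alpha>" unfolding Phi_def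
    by (metis finite_set_mset_mset_set image_iff infinite_set_mset_mset_set empty_iff set_image_mset set_mset_empty)
  then show "i \<in> {..<n}" using v unfolding validT_def valid_arc_def by (cases \<alpha>) auto
qed

lemma ray_nat: "0 < n \<Longrightarrow> i < n \<Longrightarrow> ray n T (int i) \<longleftrightarrow> Punct i \<in> T"
  unfolding ray_def by simp

lemma chord_nat: "0 < n \<Longrightarrow> i < n \<Longrightarrow> chord n T (int i) q \<longleftrightarrow> int i < q \<and> Bdry i (nat (q - int i)) \<in> T"
  unfolding chord_def by simp

lemma card_st:
  assumes v: "validT n T" "0 < n" and i: "i < n"
  shows "card {\<alpha>\<in>T. st \<alpha> = i} = cnt n T (int i)"
proof -
  let ?A = "{\<alpha>\<in>T. \<alpha> = Punct i}" and ?B = "{\<alpha>\<in>T. \<exists>d. \<alpha> = Bdry i d}"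
  have split: "{\<alpha>\<in>T. st \<alpha> = i} = ?A \<union> ?B"
  proof (intro equalityI subsetI)
    fix \<alpha> assume "\<alpha> \<in> {\<alpha>\<in>T. st \<alpha> = i}" then show "\<alpha> \<in> ?A \<union> ?B" by (cases \<alpha>) auto
  qed auto
  have disj: "?A \<inter> ?B = {}" by auto
  have A: "card ?A = (if ray n T (int i) then 1 else 0)"
  proof (cases "Punct i \<in> T")
    case True then have "?A = {Punct i}" by auto
    then show ?thesis using True ray_nat[OF v(2) i] by simp
  next
    case False then have "?A = {}" by auto
    then show ?thesis using False ray_nat[OF v(2) i] by simp
  qed
  have Beq: "?B = (\<lambda>q. Bdry i (nat (q - int i))) ` {q. chord n T (int i) q}"
  proof (intro equalityI subsetI)
    fix \<alpha> assume "\<alpha> \<in> ?B"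
    then obtain d where d: "\<alpha> = Bdry i d" "Bdry i d \<in> T" by auto
    then have "2 \<le> d" using v unfolding validT_def valid_arc_def by auto
    then have "chord n T (int i) (int i + int d)" using chord_nat[OF v(2) i] d by simp
    moreover have "\<alpha> = Bdry i (nat (int i + int d - int i))" using d by simp
    ultimately show "\<alpha> \<in> (\<lambda>q. Bdry i (nat (q - int i))) ` {q. chord n T (int i) q}" by blast
  next
    fix \<alpha> assume "\<alpha> \<in> (\<lambda>q. Bdry i (nat (q - int i))) ` {q. chord n T (int i) q}"
    then show "\<alpha> \<in> ?B" using chord_nat[OF v(2) i] by auto
  qed
  have inj: "inj_on (\<lambda>q. Bdry i (nat (q - int i))) {q. chord n T (int i) q}"
    by (rule inj_onI) (auto simp: chord_nat[OF v(2) i])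
  have fB: "finite {q. chord n T (int i) q}" using finite_chords[OF v] .
  have "card ?B = card {q. chord n T (int i) q}" using Beq card_image[OF inj] by simp
  moreover have "finite ?A" "finite ?B" using Beq fB by auto
  ultimately show ?thesis unfolding split cnt_def using card_Un_disjoint[OF _ _ disj] A by simp
qed

lemma count_Phi_cnt: "finite T \<Longrightarrow> validT n T \<Longrightarrow> 0 < n \<Longrightarrow> i < n \<Longrightarrow> count (Phi T) i = cnt n T (int i)"
  using count_Phi card_st by simp



lemma size_sum_count: "set_mset (M :: nat multiset) \<subseteq> {..<n} \<Longrightarrow> size M = (\<Sum>i<n. count M i)"
proof -
  assume a: "set_mset M \<subseteq> {..<n}"
  have "size M = sum (count M) (set_mset M)" by (simp add: size_multiset_overloaded_eq)
  also have "\<dots> = (\<Sum>i<n. count M i)"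
    by (rule sum.mono_neutral_left[OF finite_lessThan[of n] a]) (auto simp: count_eq_zero_iff)
  finally show ?thesis .
qed

locale psi =
  fixes n m :: nat and M :: "nat multiset"
  assumes npos: "0 < n" and mpos: "1 \<le> m" and setM: "set_mset M \<subseteq> {..<n}" and sz: "n = m * size M"
begin

definition c :: "int \<Rightarrow> nat" where "c x = count M (nat (x mod int n))"
definition f :: "int \<Rightarrow> int" where "f x = int m * int (c x) - 1"
definition W :: "int \<Rightarrow> int" where "W = Wf f"
definition mW :: int where "mW = Min (W ` {0..<int n})"
definition tg :: "int \<Rightarrow> nat \<Rightarrow> int" where "tg x k = W x - 1 + int m * int k"
definition fp :: "int \<Rightarrow> nat \<Rightarrow> int" where "fp x k = fpw W x (tg x k)"
definition arcP :: "nat \<Rightarrow> nat \<Rightarrow> arc" where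
  "arcP i k = (if k = 0 \<and> W (int i) = mW then Punct i else Bdry i (nat (fp (int i) k - int i)))"
definition Psi :: "arc set" where "Psi = {arcP i k | i k. i < n \<and> k < count M i}"

lemma c_shift: "c (x + j * int n) = c x"
  unfolding c_def by simp

lemma c_nat: "i < n \<Longrightarrow> c (int i) = count M i"
  unfolding c_def by simp

lemma f_per: "f (x + int n) = f x"
  using c_shift[of x 1] unfolding f_def by simp

lemma W_step: "W (x + 1) = W x + f x"
  unfolding W_def by (rule Wf_step)

lemma W_step_ge: "W y - 1 \<le> W (y + 1)"
proof -
  have "0 \<le> int m * int (c y)" by simp
  then show ?thesis using W_step[of y] unfolding f_def by linarith
qed

lemma W_n: "W (int n) = 0"
proof -
  have "W (int n) = (\<Sum>p<n. f (int p))" unfolding W_def by (rule Wf_nat)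
  also have "\<dots> = (\<Sum>p<n. int m * int (count M p) - 1)"
    by (rule sum.cong) (auto simp: f_def c_nat)
  also have "\<dots> = int m * int (\<Sum>p<n. count M p) - int n"
    by (simp add: sum_subtractf sum_distrib_left)
  also have "\<dots> = 0"
  proof -
    have e: "int n = int m * int (\<Sum>p<n. count M p)" using sz size_sum_count[OF setM] by (metis of_nat_mult)
    show ?thesis by (subst e) simp
  qed
  finally show ?thesis .
qed

lemma W_per: "W (x + int n) = W x"
  using Wf_periodic[of f n x, OF f_per] W_n unfolding W_def by simp

lemma W_shift: "W (x + j * int n) = W x"
proof (induction j rule: int_induct[where k = 0])
  case base then show ?case by simp
next
  case (step1 i)
  have "W (x + (i + 1) * int n) = W (x + i * int n + int n)" by (simp add: algebra_simps)
  then show ?case using W_per step1 by simp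
next
  case (step2 i)
  have "W (x + i * int n) = W (x + (i - 1) * int n + int n)" by (simp add: algebra_simps)
  then show ?case using W_per step2 by simp
qed

lemma W_mod: "W x = W (x mod int n)"
proof -
  have "x = x mod int n + (x div int n) * int n" by simp
  then show ?thesis using W_shift[of "x mod int n" "x div int n"] by simp
qed

lemma mW_le: "mW \<le> W y"
proof -
  have "x mod int n \<in> {0..<int n}" for x using npos by simp
  then have "mW \<le> W (y mod int n)" unfolding mW_def by (intro Min_le) auto
  then show ?thesis using W_mod by simp
qed

lemma mW_ex: "\<exists>x0. W x0 = mW"
proof -
  have "mW \<in> W ` {0..<int n}" unfolding mW_def using npos by (intro Min_in) auto
  then show ?thesis by auto
qed

lemma W_window: "\<exists>y'. x < y' \<and> y' \<le> x + int n \<and> W y' = W y"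
proof -
  define y' where "y' = x + 1 + (y - x - 1) mod int n"
  have "y - x - 1 = (y - x - 1) mod int n + ((y - x - 1) div int n) * int n" by simp
  then have "y = y' + ((y - x - 1) div int n) * int n" unfolding y'_def by simp
  then have "W y = W y'" using W_shift[of y' "(y - x - 1) div int n"] by metis
  moreover have "x < y'" "y' \<le> x + int n"
  proof -
    have "0 \<le> (y - x - 1) mod int n" "(y - x - 1) mod int n < int n" using npos by simp_all
    then show "x < y'" "y' \<le> x + int n" unfolding y'_def by linarith+
  qed
  ultimately show ?thesis by auto
qed

lemma min_c: "W x = mW \<Longrightarrow> 1 \<le> c x"
proof -
  assume "W x = mW"
  then have "W x \<le> W (x + 1)" using mW_le by simp
  then have "0 \<le> f x" using W_step by simp
  then show ?thesis unfolding f_def by (cases "c x") auto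
qed

lemma fp_props:
  assumes k: "k < c x" "\<not> (k = 0 \<and> W x = mW)"
  shows "x + 1 < fp x k" "fp x k \<le> x + int n" "W (fp x k) = tg x k" "\<And>y. x < y \<Longrightarrow> y < fp x k \<Longrightarrow> tg x k < W y"
proof -
  have st: "tg x k < W (x + 1)"
  proof -
    have "int m * int k + int m \<le> int m * int (c x)" using k(1)
      by (metis add.commute mult_Suc_right of_nat_add of_nat_le_iff of_nat_mult Suc_leI mult_le_mono2)
    moreover have "1 \<le> int m" using mpos by simp
    ultimately show ?thesis using W_step[of x] unfolding tg_def f_def by linarith
  qed
  obtain b0 where b0: "x < b0" "b0 \<le> x + int n" "W b0 \<le> tg x k"
  proof (cases "k = 0")
    case True
    then have "mW < W x" using k(2) mW_le[of x] by simp
    obtain x0 where "W x0 = mW" using mW_ex by blast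
    then obtain y' where "x < y'" "y' \<le> x + int n" "W y' = mW" using W_window[of x x0] by auto
    then show ?thesis using that True \<open>mW < W x\<close> unfolding tg_def by simp
  next
    case False
    have "W (x + int n) = W x" using W_per .
    moreover have "1 \<le> int m * int k"
    proof -
      have "0 < m * k" using False mpos by simp
      then have "1 \<le> int (m * k)" by linarith
      then show ?thesis by simp
    qed
    ultimately show ?thesis using that[of "x + int n"] npos unfolding tg_def by simp
  qed
  note P = fpw_props[of W, OF W_step_ge b0(1) b0(3) st]
  show "x + 1 < fp x k" "W (fp x k) = tg x k" using P unfolding fp_def by auto
  show "fp x k \<le> x + int n" using P(2) b0(2) unfolding fp_def by simp
  fix y assume "x < y" "y < fp x k" then show "tg x k < W y" using P(4) unfolding fp_def by simp
qed

lemma tg_shift: "tg (x + j * int n) k = tg x k"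
  unfolding tg_def using W_shift by simp

lemma fp_shift:
  assumes k: "k < c x" "\<not> (k = 0 \<and> W x = mW)"
  shows "fp (x + j * int n) k = fp x k + j * int n"
proof -
  note P = fp_props[OF k]
  have "fpw W (x + j * int n) (tg (x + j * int n) k) = fp x k + j * int n"
  proof (rule fpw_unique)
    show "x + j * int n < fp x k + j * int n" using P(1) by simp
    show "W (fp x k + j * int n) \<le> tg (x + j * int n) k" using P(3) W_shift tg_shift by simp
    fix y assume y: "x + j * int n < y" "y < fp x k + j * int n"
    have "tg x k < W (y - j * int n)" using P(4)[of "y - j * int n"] y by simp
    moreover have "W y = W (y - j * int n)" using W_shift[of "y - j * int n" j] by simp
    ultimately show "tg (x + j * int n) k < W y" using W_shift tg_shift by simp
  qed
  then show ?thesis unfolding fp_def .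
qed

lemma fp_mono:
  assumes k: "k1 < k2" "k2 < c x" "\<not> (k1 = 0 \<and> W x = mW)"
  shows "fp x k2 < fp x k1"
proof -
  have k2: "\<not> (k2 = 0 \<and> W x = mW)" using k by simp
  note P1 = fp_props[OF _ k(3)] and P2 = fp_props[OF k(2) k2]
  have t: "tg x k1 < tg x k2" unfolding tg_def using k(1) mpos by simp
  have "fp x k2 \<le> fp x k1" unfolding fp_def
    by (rule fpw_le) (use P1[of] k t in \<open>auto simp: fp_def\<close>)
  moreover have "fp x k2 \<noteq> fp x k1" using P1(3) P2(3) t k by auto
  ultimately show ?thesis by simp
qed

end



context psi begin

lemma x_decomp: "x = int (nat (x mod int n)) + (x div int n) * int n"
  using npos by simp

lemma W_nat_mod: "W (int (nat (x mod int n))) = W x"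
  using W_mod npos by simp

lemma c_nat_mod: "c (int (nat (x mod int n))) = c x"
  unfolding c_def using npos by simp

lemma mem_Psi: "\<alpha> \<in> Psi \<longleftrightarrow> (\<exists>i k. i < n \<and> k < count M i \<and> arcP i k = \<alpha>)"
  unfolding Psi_def by blast

lemma arcP_Punct: "arcP i k = Punct j \<longleftrightarrow> k = 0 \<and> W (int i) = mW \<and> j = i"
  unfolding arcP_def by auto

lemma arcP_Bdry: "arcP i k = Bdry j d \<longleftrightarrow> \<not> (k = 0 \<and> W (int i) = mW) \<and> j = i \<and> d = nat (fp (int i) k - int i)"
  unfolding arcP_def by auto

lemma ray_Psi: "ray n Psi x \<longleftrightarrow> W x = mW"
proof -
  let ?i = "nat (x mod int n)"
  have i: "?i < n" using npos by (simp add: nat_less_iff)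
  have "ray n Psi x \<longleftrightarrow> (\<exists>i k. i < n \<and> k < count M i \<and> arcP i k = Punct ?i)"
    unfolding ray_def mem_Psi ..
  also have "\<dots> \<longleftrightarrow> 0 < count M ?i \<and> W (int ?i) = mW"
    using i by (auto simp: arcP_Punct)
  also have "\<dots> \<longleftrightarrow> W x = mW"
    using min_c[of "int ?i"] c_nat[OF i] W_nat_mod by auto
  finally show ?thesis .
qed

lemma chord_Psi: "chord n Psi x y \<longleftrightarrow> (\<exists>k. k < c x \<and> \<not> (k = 0 \<and> W x = mW) \<and> y = fp x k)"
proof -
  define i where "i = nat (x mod int n)"
  define j where "j = x div int n"
  have i: "i < n" using npos unfolding i_def by (simp add: nat_less_iff)
  have ci: "c (int i) = c x" using c_nat_mod unfolding i_def .
  have Wi: "W (int i) = W x" using W_nat_mod unfolding i_def .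
  have xd: "x = int i + j * int n" using x_decomp[of x] unfolding i_def j_def .
  have cM: "count M i = c x" using c_nat[OF i] ci by simp
  have shift: "fp x k = fp (int i) k + j * int n" if "k < c x" "\<not> (k = 0 \<and> W x = mW)" for k
    using fp_shift[of k "int i" j] that ci Wi xd by simp
  have "chord n Psi x y \<longleftrightarrow> x < y \<and> (\<exists>i' k. i' < n \<and> k < count M i' \<and> arcP i' k = Bdry i (nat (y - x)))"
    unfolding chord_def mem_Psi i_def ..
  also have "\<dots> \<longleftrightarrow> (\<exists>k. k < c x \<and> \<not> (k = 0 \<and> W x = mW) \<and> y = fp x k)"
  proof
    assume "x < y \<and> (\<exists>i' k. i' < n \<and> k < count M i' \<and> arcP i' k = Bdry i (nat (y - x)))"
    then obtain i' k where k: "x < y" "i' < n" "k < count M i'" "arcP i' k = Bdry i (nat (y - x))" by blast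
    then have e: "i' = i" "\<not> (k = 0 \<and> W (int i) = mW)" "nat (y - x) = nat (fp (int i) k - int i)"
      unfolding arcP_Bdry by auto
    have k2: "k < c x" "\<not> (k = 0 \<and> W x = mW)" using k(3) e cM Wi by auto
    have "x + 1 < fp x k" using fp_props(1)[OF k2] .
    then have "y - x = fp (int i) k - int i" using k(1) e(3) shift[OF k2] xd by simp
    then have "y = fp x k" using shift[OF k2] xd by simp
    then show "\<exists>k. k < c x \<and> \<not> (k = 0 \<and> W x = mW) \<and> y = fp x k" using k2 by blast
  next
    assume "\<exists>k. k < c x \<and> \<not> (k = 0 \<and> W x = mW) \<and> y = fp x k"
    then obtain k where k: "k < c x" "\<not> (k = 0 \<and> W x = mW)" "y = fp x k" by blast
    have "x + 1 < fp x k" using fp_props(1)[OF k(1,2)] .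
    moreover have "fp x k - x = fp (int i) k - int i" using shift[OF k(1,2)] xd by simp
    moreover have "arcP i k = Bdry i (nat (fp (int i) k - int i))" unfolding arcP_Bdry using k Wi by simp
    ultimately have "x < y" "i < n \<and> k < count M i \<and> arcP i k = Bdry i (nat (y - x))"
      using k i cM by auto
    then show "x < y \<and> (\<exists>i' k. i' < n \<and> k < count M i' \<and> arcP i' k = Bdry i (nat (y - x)))"
      by blast
  qed
  finally show ?thesis .
qed

lemma finite_Psi: "finite Psi"
proof -
  have "Psi \<subseteq> (\<lambda>(i, k). arcP i k) ` ({..<n} \<times> {..<size M + 1})"
  proof
    fix \<alpha> assume "\<alpha> \<in> Psi"
    then obtain i k where ik: "\<alpha> = arcP i k" "i < n" "k < count M i" unfolding Psi_def by blast
    have "count M i \<le> size M" by (simp add: count_le_size)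
    then show "\<alpha> \<in> (\<lambda>(i, k). arcP i k) ` ({..<n} \<times> {..<size M + 1})" using ik by force
  qed
  then show ?thesis by (rule finite_subset) auto
qed

lemma valid_Psi: "validT n Psi"
  unfolding validT_def
proof
  fix \<alpha> assume "\<alpha> \<in> Psi"
  then obtain i k where ik: "\<alpha> = arcP i k" "i < n" "k < count M i" unfolding Psi_def by blast
  show "valid_arc n \<alpha>"
  proof (cases "k = 0 \<and> W (int i) = mW")
    case True then show ?thesis using ik unfolding arcP_def valid_arc_def by simp
  next
    case False
    have k: "k < c (int i)" using ik c_nat by simp
    note P = fp_props[OF k False]
    have "2 \<le> fp (int i) k - int i" "fp (int i) k - int i \<le> int n" using P(1,2) by simp_all
    then have "2 \<le> nat (fp (int i) k - int i)" "nat (fp (int i) k - int i) \<le> n" by linarith+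
    then show ?thesis using ik False unfolding arcP_def valid_arc_def by simp
  qed
qed

end



lemma card_k_set: "card {k'::nat. k' < a \<and> \<not> (k' = 0 \<and> P)} = (if P \<and> 0 < a then a - 1 else a)"
proof (cases P)
  case True
  then have "{k'::nat. k' < a \<and> \<not> (k' = 0 \<and> P)} = {1..<a}" by auto
  then show ?thesis using True by auto
next
  case False
  then have "{k'::nat. k' < a \<and> \<not> (k' = 0 \<and> P)} = {..<a}" by auto
  then show ?thesis using False by auto
qed

context psi begin

lemma fp_inj: "inj_on (fp x) {k. k < c x \<and> \<not> (k = 0 \<and> W x = mW)}"
proof (rule inj_onI)
  fix k1 k2 assume k1: "k1 \<in> {k. k < c x \<and> \<not> (k = 0 \<and> W x = mW)}" and k2: "k2 \<in> {k. k < c x \<and> \<not> (k = 0 \<and> W x = mW)}"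
    and e: "fp x k1 = fp x k2"
  show "k1 = k2"
  proof (rule ccontr)
    assume "k1 \<noteq> k2"
    then consider "k1 < k2" | "k2 < k1" by linarith
    then show False
    proof cases
      case 1 then show False using fp_mono[of k1 k2 x] k1 k2 e by auto
    next
      case 2 then show False using fp_mono[of k2 k1 x] k1 k2 e by auto
    qed
  qed
qed

lemma chords_Psi: "{q. chord n Psi x q} = fp x ` {k. k < c x \<and> \<not> (k = 0 \<and> W x = mW)}"
  using chord_Psi by auto

lemma cnt_Psi: "cnt n Psi x = c x"
proof -
  have "card {q. chord n Psi x q} = card {k. k < c x \<and> \<not> (k = 0 \<and> W x = mW)}"
    unfolding chords_Psi by (rule card_image[OF fp_inj])
  also have "\<dots> = (if W x = mW \<and> 0 < c x then c x - 1 else c x)" by (rule card_k_set)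
  finally show ?thesis unfolding cnt_def ray_Psi using min_c[of x] by auto
qed

lemma K_Psi:
  assumes k: "k < c x" "\<not> (k = 0 \<and> W x = mW)"
  shows "K n Psi x (fp x k) = k"
proof -
  have eq: "{q. chord n Psi x q \<and> fp x k < q} = fp x ` {k'. k' < k \<and> \<not> (k' = 0 \<and> W x = mW)}"
  proof (intro equalityI subsetI)
    fix q assume "q \<in> {q. chord n Psi x q \<and> fp x k < q}"
    then obtain k' where k': "k' < c x" "\<not> (k' = 0 \<and> W x = mW)" "q = fp x k'" "fp x k < fp x k'"
      using chord_Psi by auto
    have "k' < k"
    proof (rule ccontr)
      assume "\<not> k' < k"
      then consider "k' = k" | "k < k'" by linarith
      then show False
      proof cases
        case 1 then show False using k' by simp
      next
        case 2 then show False using fp_mono[of k k' x] k k' by simp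
      qed
    qed
    then show "q \<in> fp x ` {k'. k' < k \<and> \<not> (k' = 0 \<and> W x = mW)}" using k' by auto
  next
    fix q assume "q \<in> fp x ` {k'. k' < k \<and> \<not> (k' = 0 \<and> W x = mW)}"
    then obtain k' where k': "k' < k" "\<not> (k' = 0 \<and> W x = mW)" "q = fp x k'" by auto
    have "k' < c x" using k' k by simp
    then have "chord n Psi x q" unfolding chord_Psi using k' by blast
    moreover have "fp x k < fp x k'" using fp_mono[of k' k x] k k' by simp
    ultimately show "q \<in> {q. chord n Psi x q \<and> fp x k < q}" using k' by simp
  qed
  have "inj_on (fp x) {k'. k' < k \<and> \<not> (k' = 0 \<and> W x = mW)}"
    by (rule inj_on_subset[OF fp_inj]) (use k in auto)
  then have "card {q. chord n Psi x q \<and> fp x k < q} = card {k'. k' < k \<and> \<not> (k' = 0 \<and> W x = mW)}"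
    unfolding eq by (rule card_image)
  also have "\<dots> = (if W x = mW \<and> 0 < k then k - 1 else k)" by (rule card_k_set)
  finally show ?thesis unfolding K_def ray_Psi using k by auto
qed

lemma side_law: "side n Psi x y \<Longrightarrow> W y = W x - 1 + int m * int (K n Psi x y)"
proof -
  assume "side n Psi x y"
  then consider "y = x + 1" | "chord n Psi x y" unfolding side_def by blast
  then show ?thesis
  proof cases
    case 1
    then show ?thesis using K_unit[OF valid_Psi npos, of x] cnt_Psi W_step[of x] unfolding f_def by simp
  next
    case 2
    then obtain k where k: "k < c x" "\<not> (k = 0 \<and> W x = mW)" "y = fp x k" using chord_Psi by auto
    then show ?thesis using fp_props(3)[OF k(1,2)] K_Psi[OF k(1,2)] unfolding tg_def by simp
  qed
qed

lemma nc_Psi: "noncrossing n Psi"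
proof (rule nc_intro[OF valid_Psi npos])
  fix a b p q assume ab: "chord n Psi a b" and pq: "chord n Psi p q"
  show "\<not> (a < p \<and> p < b \<and> b < q)"
  proof
    assume h: "a < p \<and> p < b \<and> b < q"
    obtain k where k: "k < c a" "\<not> (k = 0 \<and> W a = mW)" "b = fp a k" using ab chord_Psi by auto
    obtain k' where k': "k' < c p" "\<not> (k' = 0 \<and> W p = mW)" "q = fp p k'" using pq chord_Psi by auto
    have "tg a k < W p" using fp_props(4)[OF k(1,2), of p] h k(3) by simp
    moreover have "W b = tg a k" using fp_props(3)[OF k(1,2)] k(3) by simp
    moreover have "0 \<le> int m * int k'" by simp
    ultimately have "W b \<le> tg p k'" unfolding tg_def by linarith
    then have "fp p k' \<le> b" unfolding fp_def using fpw_le[of p b W] h by simp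
    then show False using h k' by simp
  qed
next
  fix a b p assume ab: "chord n Psi a b" and r: "ray n Psi p"
  show "\<not> (a < p \<and> p < b)"
  proof
    assume h: "a < p \<and> p < b"
    obtain k where k: "k < c a" "\<not> (k = 0 \<and> W a = mW)" "b = fp a k" using ab chord_Psi by auto
    have "tg a k < W p" using fp_props(4)[OF k(1,2), of p] h k(3) by simp
    moreover have "W b = tg a k" using fp_props(3)[OF k(1,2)] k(3) by simp
    moreover have "W p = mW" using r ray_Psi by simp
    ultimately show False using mW_le[of b] by simp
  qed
qed

lemma punct_Psi: "\<exists>i. Punct i \<in> Psi"
proof -
  obtain x0 where "W x0 = mW" using mW_ex by blast
  then have "ray n Psi x0" using ray_Psi by simp
  then show ?thesis unfolding ray_def by blast
qed

lemma faces_Psi: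
  assumes f: "is_face n Psi xs" shows "length xs = m + 2"
proof -
  have so: "sorted_wrt lv_less xs" using f unfolding is_face_def by simp
  have law: "\<forall>s. s + 1 < length ys \<longrightarrow> W (ys ! (s + 1)) = W (ys ! s) - 1 + int m * int (K n Psi (ys ! s) (ys ! (s + 1)))"
    if "\<forall>i. i + 1 < length ys \<longrightarrow> side n Psi (ys ! i) (ys ! (i + 1))" for ys
    using that side_law by blast
  from sorted_lv_shape[OF so] show ?thesis
  proof (elim disjE exE)
    fix ys assume xs: "xs = map Fin ys"
    then have cf: "cface n Psi ys" using f is_face_cface[OF valid_Psi npos] by simp
    have l: "3 \<le> length ys" and sides: "\<forall>i. i + 1 < length ys \<longrightarrow> side n Psi (ys ! i) (ys ! (i + 1))"
      using cf unfolding cface_def by auto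
    have ne: "ys \<noteq> []" using l by auto
    note KK = cface_K[OF valid_Psi npos nc_Psi cf]
    have "W (ys ! (length ys - 1)) = W (ys ! 0) - int (length ys - 1) + int m * int (K n Psi (ys ! 0) (ys ! 1))"
      using telescope[of ys W m n Psi, OF law[OF sides] KK(2), of "length ys - 1"] l by simp
    moreover have "chord n Psi (ys ! 0) (ys ! (length ys - 1))" using cface_chord[OF cf] hd_nth0[OF ne] last_nth[OF ne] by simp
    then have "W (ys ! (length ys - 1)) = W (ys ! 0) - 1 + int m * int (K n Psi (ys ! 0) (ys ! (length ys - 1)))"
      using side_law unfolding side_def by blast
    moreover have "K n Psi (ys ! 0) (ys ! 1) = K n Psi (ys ! 0) (ys ! (length ys - 1)) + 1"
      using KK(1) last_nth[OF ne] by simp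
    ultimately have "int (length ys - 1) = int m + 1" by (simp add: algebra_simps)
    then show ?thesis using xs l by simp
  next
    fix ys assume xs: "xs = map Fin ys @ [Inf]"
    then have rf: "rface n Psi ys" using f is_face_rface[OF valid_Psi npos] by simp
    have l: "2 \<le> length ys" and sides: "\<forall>i. i + 1 < length ys \<longrightarrow> side n Psi (ys ! i) (ys ! (i + 1))"
      and r1: "ray n Psi (last ys)" and r2: "ray n Psi (hd ys)"
      using rf unfolding rface_def by auto
    have ne: "ys \<noteq> []" using l by auto
    note KK = rface_K[OF valid_Psi npos nc_Psi rf]
    have "W (ys ! (length ys - 1)) = W (ys ! 0) - int (length ys - 1) + int m * int (K n Psi (ys ! 0) (ys ! 1))"
      using telescope[of ys W m n Psi, OF law[OF sides] KK(2), of "length ys - 1"] l by simp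
    moreover have "W (ys ! (length ys - 1)) = mW" "W (ys ! 0) = mW"
      using r1 r2 ray_Psi hd_nth0[OF ne] last_nth[OF ne] by auto
    ultimately have "int (length ys - 1) = int m" using KK(1) by simp
    then show ?thesis using xs l by simp
  qed
qed

lemma ang_Psi: "is_angulation m n Psi"
  unfolding is_angulation_def using valid_Psi nc_Psi punct_Psi faces_Psi unfolding validT_def by blast

lemma Phi_Psi: "Phi Psi = M"
proof (rule multiset_eqI)
  fix i
  show "count (Phi Psi) i = count M i"
  proof (cases "i < n")
    case True
    then show ?thesis using count_Phi_cnt[OF finite_Psi valid_Psi npos True] cnt_Psi c_nat[OF True] by simp
  next
    case False
    then have "i \<notin># Phi Psi" "i \<notin># M" using set_Phi[OF valid_Psi] setM by auto
    then show ?thesis by (simp add: not_in_iff)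
  qed
qed

end



definition Vset :: "int \<Rightarrow> int \<Rightarrow> (int \<times> int) set \<Rightarrow> int set" where
  "Vset a B C = {y. a \<le> y \<and> y \<le> B \<and> \<not> (\<exists>(p, q)\<in>C. p < y \<and> y < q)}"

locale vface =
  fixes a B :: int and C :: "(int \<times> int) set"
  assumes aB: "a < B" and finC: "finite C"
    and inC: "\<And>p q. (p, q) \<in> C \<Longrightarrow> a \<le> p \<and> p < q \<and> q \<le> B"
    and ncC: "\<And>p q p' q'. (p, q) \<in> C \<Longrightarrow> (p', q') \<in> C \<Longrightarrow> \<not> (p < p' \<and> p' < q \<and> q < q')"
begin

definition ys where "ys = sorted_list_of_set (Vset a B C)"

lemma finV: "finite (Vset a B C)"
  by (rule finite_subset[of _ "{a..B}"]) (auto simp: Vset_def)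

lemma set_ys: "set ys = Vset a B C"
  unfolding ys_def using finV by simp

lemma sorted_ys: "sorted_wrt (<) ys"
  unfolding ys_def by (rule strict_sorted_list_of_set)

lemma a_in: "a \<in> Vset a B C" and B_in: "B \<in> Vset a B C"
  unfolding Vset_def using aB inC by force+

lemma ne_ys: "ys \<noteq> []" using set_ys a_in by auto

lemma V_bounds: "y \<in> Vset a B C \<Longrightarrow> a \<le> y \<and> y \<le> B"
  unfolding Vset_def by auto

lemma hd_ys: "hd ys = a"
proof -
  have "hd ys \<in> set ys" using ne_ys by simp
  then have "a \<le> hd ys" using set_ys V_bounds by auto
  moreover have "hd ys \<le> a"
  proof -
    obtain j where j: "j < length ys" "ys ! j = a" using a_in set_ys by (metis in_set_conv_nth)
    show ?thesis
    proof (cases "j = 0")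
      case True then show ?thesis using j ne_ys by (simp add: hd_conv_nth)
    next
      case False then show ?thesis using sorted_nth_less[OF sorted_ys, of 0 j] j ne_ys by (simp add: hd_conv_nth)
    qed
  qed
  ultimately show ?thesis by simp
qed

lemma last_ys: "last ys = B"
proof -
  have "last ys \<in> set ys" using ne_ys by simp
  then have "last ys \<le> B" using set_ys V_bounds by auto
  moreover have "B \<le> last ys"
  proof -
    obtain j where j: "j < length ys" "ys ! j = B" using B_in set_ys by (metis in_set_conv_nth)
    show ?thesis
    proof (cases "j = length ys - 1")
      case True then show ?thesis using j ne_ys by (simp add: last_conv_nth)
    next
      case False
      then have "j < length ys - 1" using j by simp
      then show ?thesis using sorted_nth_less[OF sorted_ys, of j "length ys - 1"] j ne_ys by (simp add: last_conv_nth)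
    qed
  qed
  ultimately show ?thesis by simp
qed

lemma len_ys: "2 \<le> length ys"
proof -
  have "a \<in> set ys" "B \<in> set ys" using a_in B_in set_ys by auto
  then have "card {a, B} \<le> card (set ys)" by (intro card_mono) auto
  then show ?thesis using aB card_length[of ys] by simp
qed

lemma gap_chord:
  assumes x: "x \<in> Vset a B C" and y: "y \<in> Vset a B C" and xy: "x < y"
    and gap: "\<not> (\<exists>v\<in>Vset a B C. x < v \<and> v < y)" and nu: "y \<noteq> x + 1"
  shows "(x, y) \<in> C"
proof -
  have bx: "a \<le> x" "y \<le> B" using x y V_bounds by auto
  have z: "x + 1 \<notin> Vset a B C" using gap nu xy by auto
  then obtain p q where pq: "(p, q) \<in> C" "p < x + 1" "x + 1 < q"
    unfolding Vset_def using bx xy by force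
  have xcov: "\<And>p q. (p, q) \<in> C \<Longrightarrow> \<not> (p < x \<and> x < q)" using x unfolding Vset_def by auto
  have ycov: "\<And>p q. (p, q) \<in> C \<Longrightarrow> \<not> (p < y \<and> y < q)" using y unfolding Vset_def by auto
  have "p = x" using xcov[OF pq(1)] pq by auto
  define S where "S = {q. (x, q) \<in> C}"
  have finS: "finite S" unfolding S_def
    by (rule finite_subset[of _ "snd ` C"]) (use finC in \<open>auto simp: image_iff\<close>, force)
  have qS: "q \<in> S" using pq \<open>p = x\<close> unfolding S_def by simp
  define qm where "qm = Max S"
  have qm: "qm \<in> S" "\<And>q'. q' \<in> S \<Longrightarrow> q' \<le> qm" unfolding qm_def using finS qS
    by (auto intro: Max_in Max_ge)
  have "qm \<le> y"
  proof (rule ccontr)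
    assume "\<not> qm \<le> y"
    then show False using ycov[of x qm] qm(1) xy unfolding S_def by auto
  qed
  moreover have "\<not> qm < y"
  proof
    assume lt: "qm < y"
    have xq: "x < qm" using qm(1) inC unfolding S_def by auto
    then have "qm \<notin> Vset a B C" using gap lt qm(1) by auto
    moreover have "a \<le> qm" "qm \<le> B" using xq bx lt by auto
    ultimately obtain p' q' where pq': "(p', q') \<in> C" "p' < qm" "qm < q'" unfolding Vset_def by auto
    show False
    proof (cases "p' < x")
      case True then show False using xcov[OF pq'(1)] pq' xq by auto
    next
      case False
      show False
      proof (cases "p' = x")
        case True
        then have "q' \<in> S" using pq' unfolding S_def by simp
        then show False using qm(2) pq' by force
      next
        case False
        then have "x < p'" using \<open>\<not> p' < x\<close> by simp
        then show False using ncC[of x qm p' q'] qm(1) pq' unfolding S_def by auto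
      qed
    qed
  qed
  ultimately have "qm = y" by simp
  then show ?thesis using qm(1) unfolding S_def by simp
qed

lemma ys_consec:
  assumes i: "i + 1 < length ys"
  shows "ys ! (i + 1) = ys ! i + 1 \<or> (ys ! i, ys ! (i + 1)) \<in> C"
proof -
  have xin: "ys ! i \<in> Vset a B C" "ys ! (i + 1) \<in> Vset a B C" using i set_ys nth_mem by fastforce+
  have lt: "ys ! i < ys ! (i + 1)" using sorted_nth_less[OF sorted_ys] i by simp
  have gap: "\<not> (\<exists>v\<in>Vset a B C. ys ! i < v \<and> v < ys ! (i + 1))"
  proof
    assume "\<exists>v\<in>Vset a B C. ys ! i < v \<and> v < ys ! (i + 1)"
    then obtain v where v: "v \<in> Vset a B C" "ys ! i < v" "v < ys ! (i + 1)" by blast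
    then obtain j where j: "j < length ys" "ys ! j = v" using set_ys by (metis in_set_conv_nth)
    have "i < j" "j < i + 1" using sorted_nth_less_iff[OF sorted_ys] i j v by (metis add_lessD1)+
    then show False by simp
  qed
  show ?thesis using gap_chord[OF xin lt gap] by blast
qed

lemma ys_nonconsec:
  assumes ij: "i + 1 < j" "j < length ys"
  shows "(ys ! i, ys ! j) \<notin> C"
proof
  assume c: "(ys ! i, ys ! j) \<in> C"
  have v: "ys ! (i + 1) \<in> Vset a B C" using ij set_ys nth_mem by fastforce
  have "ys ! i < ys ! (i + 1)" "ys ! (i + 1) < ys ! j" using sorted_nth_less[OF sorted_ys] ij by auto
  then show False using v c unfolding Vset_def by auto
qed

lemma ys_cover:
  assumes "a \<le> y" "y \<le> B"
  shows "(\<exists>t. t < length ys \<and> y = ys ! t) \<or> (\<exists>s. s + 1 < length ys \<and> ys ! s < y \<and> y < ys ! (s + 1))"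
  using sorted_between[OF sorted_ys ne_ys, of y] assms hd_ys last_ys by (auto simp: in_set_conv_nth)

end



locale ang =
  fixes n m :: nat and T :: "arc set"
  assumes npos: "0 < n" and mpos: "1 \<le> m" and valid: "validT n T" and nc: "noncrossing n T"
    and punct: "\<exists>i. Punct i \<in> T" and faces: "\<And>xs. is_face n T xs \<Longrightarrow> length xs = m + 2"
begin

definition fT :: "int \<Rightarrow> int" where "fT x = int m * int (cnt n T x) - 1"
definition WT :: "int \<Rightarrow> int" where "WT = Wf fT"

lemma WT_step: "WT (x + 1) = WT x - 1 + int m * int (K n T x (x + 1))"
  unfolding WT_def using Wf_step[of fT x] K_unit[OF valid npos] unfolding fT_def by simp

lemma vface_intro:
  assumes "a < B" "C \<subseteq> {(p, q). chord n T p q \<and> a \<le> p \<and> q \<le> B}"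
  shows "vface a B C"
proof
  show "a < B" by fact
  show "finite C" by (rule finite_subset[of _ "{a..B} \<times> {a..B}"]) (use assms chord_def in auto)
  fix p q assume "(p, q) \<in> C" then show "a \<le> p \<and> p < q \<and> q \<le> B" using assms chord_def by auto
next
  fix p q p' q' assume "(p, q) \<in> C" "(p', q') \<in> C"
  then show "\<not> (p < p' \<and> p' < q \<and> q < q')" using assms nc_cc[OF nc valid npos] by blast
qed

lemma chord_W_aux:
  "\<forall>a b. nat (b - a) = N \<longrightarrow> chord n T a b \<longrightarrow>
     WT b = WT a - 1 + int m * int (K n T a b) \<and> (\<forall>y. a < y \<and> y < b \<longrightarrow> WT b < WT y)"
proof (induction N rule: less_induct)
  case (less N)
  show ?case
  proof (intro allI impI)
    fix a b assume N: "nat (b - a) = N" and ab: "chord n T a b"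
    have IH: "WT q = WT p - 1 + int m * int (K n T p q) \<and> (\<forall>y. p < y \<and> y < q \<longrightarrow> WT q < WT y)"
      if pq: "chord n T p q" "q - p < b - a" for p q
    proof -
      have "p < q" using pq chord_def by simp
      then have "nat (q - p) < N" using N pq(2) by simp
      then show ?thesis using less.IH pq(1) by blast
    qed
    have ab2: "a + 2 \<le> b" using chord_bounds[OF valid npos ab] by simp
    define C where "C = {(p, q). chord n T p q \<and> a \<le> p \<and> q \<le> b \<and> (p, q) \<noteq> (a, b)}"
    interpret V: vface a b C by (rule vface_intro) (use ab2 C_def in auto)
    let ?ys = "V.ys"
    have so: "sorted_wrt (<) ?ys" by (rule V.sorted_ys)
    have ne: "?ys \<noteq> []" by (rule V.ne_ys)
    have h0: "?ys ! 0 = a" using V.hd_ys hd_nth0[OF ne] by simp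
    have hl: "?ys ! (length ?ys - 1) = b" using V.last_ys last_nth[OF ne] by simp
    have sides: "\<forall>i. i + 1 < length ?ys \<longrightarrow> side n T (?ys ! i) (?ys ! (i + 1))"
      using V.ys_consec unfolding side_def C_def by blast
    have l3: "3 \<le> length ?ys"
    proof (rule ccontr)
      assume "\<not> 3 \<le> length ?ys"
      then have l2: "length ?ys = 2" using V.len_ys by simp
      then have "?ys ! 1 = b" using hl by simp
      then show False using V.ys_consec[of 0] l2 h0 ab2 unfolding C_def by auto
    qed
    have cf: "cface n T ?ys"
      unfolding cface_def
    proof (intro conjI allI impI)
      show "3 \<le> length ?ys" by fact
      show "sorted_wrt (<) ?ys" by fact
      fix i assume "i + 1 < length ?ys" then show "side n T (?ys ! i) (?ys ! (i + 1))" using sides by blast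
    next
      show "side n T (hd ?ys) (last ?ys)" using ab V.hd_ys V.last_ys unfolding side_def by simp
    next
      fix i j assume ij: "i + 1 < j \<and> j < length ?ys \<and> \<not> (i = 0 \<and> j = length ?ys - 1)"
      show "\<not> chord n T (?ys ! i) (?ys ! j)"
      proof
        assume c: "chord n T (?ys ! i) (?ys ! j)"
        have "i < length ?ys" "j < length ?ys" using ij by auto
        then have "?ys ! i \<in> Vset a b C" "?ys ! j \<in> Vset a b C" using V.set_ys nth_mem by blast+
        then have bnd: "a \<le> ?ys ! i" "?ys ! j \<le> b" using V.V_bounds by auto
        have "(?ys ! i, ?ys ! j) \<noteq> (a, b)"
        proof
          assume e: "(?ys ! i, ?ys ! j) = (a, b)"
          have "i = 0"
          proof (rule ccontr)
            assume "i \<noteq> 0"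
            then have "?ys ! 0 < ?ys ! i" using sorted_nth_less[OF so, of 0 i] ij by simp
            then show False using e h0 by simp
          qed
          moreover have "j = length ?ys - 1"
          proof (rule ccontr)
            assume "j \<noteq> length ?ys - 1"
            then have "j < length ?ys - 1" using ij by arith
            then have "?ys ! j < ?ys ! (length ?ys - 1)" using sorted_nth_less[OF so, of j "length ?ys - 1"] ij by simp
            then show False using e hl by simp
          qed
          ultimately show False using ij by simp
        qed
        then have "(?ys ! i, ?ys ! j) \<in> C" using c bnd unfolding C_def by simp
        then show False using V.ys_nonconsec ij by blast
      qed
    qed
    have len: "length ?ys = m + 2" using faces[of "map Fin ?ys"] is_face_cface[OF valid npos] cf by simp
    have law: "\<forall>s. s + 1 < length ?ys \<longrightarrow> WT (?ys ! (s + 1)) = WT (?ys ! s) - 1 + int m * int (K n T (?ys ! s) (?ys ! (s + 1)))"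
    proof (intro allI impI)
      fix s assume s: "s + 1 < length ?ys"
      from V.ys_consec[OF s] show "WT (?ys ! (s + 1)) = WT (?ys ! s) - 1 + int m * int (K n T (?ys ! s) (?ys ! (s + 1)))"
      proof
        assume "?ys ! (s + 1) = ?ys ! s + 1" then show ?thesis using WT_step by simp
      next
        assume "(?ys ! s, ?ys ! (s + 1)) \<in> C"
        then have c: "chord n T (?ys ! s) (?ys ! (s + 1))" "a \<le> ?ys ! s" "?ys ! (s + 1) \<le> b" "(?ys ! s, ?ys ! (s + 1)) \<noteq> (a, b)"
          unfolding C_def by auto
        then have "?ys ! (s + 1) - ?ys ! s < b - a" by auto
        then show ?thesis using IH[OF c(1)] by blast
      qed
    qed
    note KK = cface_K[OF valid npos nc cf]
    have K0: "K n T (?ys ! 0) (?ys ! 1) = K n T a b + 1" using KK(1) h0 V.last_ys by simp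
    have tel: "\<And>t. 1 \<le> t \<Longrightarrow> t < length ?ys \<Longrightarrow> WT (?ys ! t) = WT a - int t + int m * (int (K n T a b) + 1)"
      using telescope[of ?ys WT m n T, OF law KK(2)] K0 h0 by simp
    have Wb: "WT b = WT a - 1 + int m * int (K n T a b)"
      using tel[of "m + 1"] len hl by (simp add: algebra_simps)
    have Wge: "WT b \<le> WT (?ys ! t)" if t: "1 \<le> t" "t < length ?ys" for t
    proof -
      have "WT (?ys ! t) = WT a - int t + int m * int (K n T a b) + int m" using tel[OF t] by (simp add: algebra_simps)
      moreover have "int t \<le> int m + 1" using t len by simp
      ultimately show ?thesis using Wb by linarith
    qed
    have inner: "WT b < WT y" if y: "a < y" "y < b" for y
    proof -
      have cov: "(\<exists>t. t < length ?ys \<and> y = ?ys ! t) \<or> (\<exists>s. s + 1 < length ?ys \<and> ?ys ! s < y \<and> y < ?ys ! (s + 1))"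
        using V.ys_cover[of y] y by simp
      from cov show ?thesis
      proof (elim disjE exE conjE)
        fix t assume t: "t < length ?ys" "y = ?ys ! t"
        have "t \<noteq> 0" proof assume "t = 0" then show False using t y h0 by simp qed
        moreover have "t \<noteq> length ?ys - 1" proof assume "t = length ?ys - 1" then show False using t y hl by simp qed
        ultimately have "1 \<le> t" "t \<le> m" using t len by auto
        have "WT (?ys ! t) = WT a - int t + int m * int (K n T a b) + int m" using tel[of t] t \<open>1 \<le> t\<close> by (simp add: algebra_simps)
        moreover have "int t \<le> int m" using \<open>t \<le> m\<close> by simp
        ultimately have "WT b < WT (?ys ! t)" using Wb by linarith
        then show ?thesis using t by simp
      next
        fix s assume s: "s + 1 < length ?ys" "?ys ! s < y" "y < ?ys ! (s + 1)"
        then have "?ys ! (s + 1) \<noteq> ?ys ! s + 1" by simp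
        then have "(?ys ! s, ?ys ! (s + 1)) \<in> C" using V.ys_consec[OF s(1)] by simp
        then have c: "chord n T (?ys ! s) (?ys ! (s + 1))" "a \<le> ?ys ! s" "?ys ! (s + 1) \<le> b" "(?ys ! s, ?ys ! (s + 1)) \<noteq> (a, b)"
          unfolding C_def by auto
        then have "?ys ! (s + 1) - ?ys ! s < b - a" by auto
        then have "WT (?ys ! (s + 1)) < WT y" using IH[OF c(1)] s by blast
        moreover have "WT b \<le> WT (?ys ! (s + 1))" using Wge[of "s + 1"] s by simp
        ultimately show ?thesis by simp
      qed
    qed
    show "WT b = WT a - 1 + int m * int (K n T a b) \<and> (\<forall>y. a < y \<and> y < b \<longrightarrow> WT b < WT y)"
      using Wb inner by blast
  qed
qed

lemma chord_W:
  assumes "chord n T a b"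
  shows "WT b = WT a - 1 + int m * int (K n T a b)" "\<And>y. a < y \<Longrightarrow> y < b \<Longrightarrow> WT b < WT y"
  using chord_W_aux[of "nat (b - a)"] assms by blast+

end



lemma ray_shift: "0 < n \<Longrightarrow> ray n T (x + j * int n) \<longleftrightarrow> ray n T x"
  unfolding ray_def by simp

lemma chord_shift: "0 < n \<Longrightarrow> chord n T (x + j * int n) (y + j * int n) \<longleftrightarrow> chord n T x y"
  unfolding chord_def by simp

lemma cnt_shift:
  assumes "0 < n" shows "cnt n T (x + j * int n) = cnt n T x"
proof -
  have "{q. chord n T (x + j * int n) q} = (\<lambda>q. q + j * int n) ` {q. chord n T x q}"
  proof (intro equalityI subsetI)
    fix q assume "q \<in> {q. chord n T (x + j * int n) q}"
    then have "chord n T x (q - j * int n)" using chord_shift[OF assms, where x = x and j = j and y = "q - j * int n" and T = T] by simp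
    then show "q \<in> (\<lambda>q. q + j * int n) ` {q. chord n T x q}" by (auto intro: image_eqI[of _ _ "q - j * int n"])
  next
    fix q assume "q \<in> (\<lambda>q. q + j * int n) ` {q. chord n T x q}"
    then show "q \<in> {q. chord n T (x + j * int n) q}" using chord_shift[OF assms] by auto
  qed
  moreover have "inj_on (\<lambda>q. q + j * int n) {q. chord n T x q}" by (rule inj_onI) simp
  ultimately have "card {q. chord n T (x + j * int n) q} = card {q. chord n T x q}" by (simp add: card_image)
  then show ?thesis unfolding cnt_def using ray_shift[OF assms] by simp
qed

lemma finite_valid: "validT n T \<Longrightarrow> finite T"
proof -
  assume v: "validT n T"
  have "T \<subseteq> Punct ` {..<n} \<union> (\<lambda>(i, d). Bdry i d) ` ({..<n} \<times> {..n})"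
  proof
    fix \<alpha> assume "\<alpha> \<in> T"
    then have "valid_arc n \<alpha>" using v unfolding validT_def by blast
    then show "\<alpha> \<in> Punct ` {..<n} \<union> (\<lambda>(i, d). Bdry i d) ` ({..<n} \<times> {..n})"
      unfolding valid_arc_def by (cases \<alpha>) force+
  qed
  then show ?thesis by (rule finite_subset) auto
qed

context ang begin

lemma finT: "finite T" using finite_valid[OF valid] .

definition nxt :: "int \<Rightarrow> int" where
  "nxt a = a + int (LEAST d::nat. 0 < d \<and> ray n T (a + int d))"

lemma nxt_props:
  assumes r: "ray n T a"
  shows "a < nxt a" "nxt a \<le> a + int n" "ray n T (nxt a)" "\<And>y. a < y \<Longrightarrow> y < nxt a \<Longrightarrow> \<not> ray n T y"
proof -
  define P where "P = (\<lambda>d::nat. 0 < d \<and> ray n T (a + int d))"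
  have Pn: "P n" unfolding P_def using npos ray_shift[OF npos, of T a 1] r by simp
  have Pd: "P (LEAST d. P d)" by (rule LeastI[of P, OF Pn])
  have le: "(LEAST d. P d) \<le> n" by (rule Least_le[of P, OF Pn])
  have nx: "nxt a = a + int (LEAST d. P d)" unfolding nxt_def P_def ..
  show "a < nxt a" "ray n T (nxt a)" using Pd nx unfolding P_def by auto
  show "nxt a \<le> a + int n" using le nx by simp
  fix y assume y: "a < y" "y < nxt a"
  then have "nat (y - a) < (LEAST d. P d)" using nx by simp
  then have "\<not> P (nat (y - a))" by (rule not_less_Least)
  then show "\<not> ray n T y" using y unfolding P_def by simp
qed

lemma ray_W:
  assumes r: "ray n T a"
  shows "WT (nxt a) = WT a" "\<And>y. a \<le> y \<Longrightarrow> y \<le> nxt a \<Longrightarrow> WT a \<le> WT y"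
proof -
  let ?a' = "nxt a"
  note N = nxt_props[OF r]
  define C where "C = {(p, q). chord n T p q \<and> a \<le> p \<and> q \<le> ?a'}"
  interpret V: vface a ?a' C by (rule vface_intro) (use N(1) C_def in auto)
  let ?ys = "V.ys"
  have so: "sorted_wrt (<) ?ys" by (rule V.sorted_ys)
  have ne: "?ys \<noteq> []" by (rule V.ne_ys)
  have h0: "?ys ! 0 = a" using V.hd_ys hd_nth0[OF ne] by simp
  have hl: "?ys ! (length ?ys - 1) = ?a'" using V.last_ys last_nth[OF ne] by simp
  have sides: "\<forall>i. i + 1 < length ?ys \<longrightarrow> side n T (?ys ! i) (?ys ! (i + 1))"
    using V.ys_consec unfolding side_def C_def by blast
  have rf: "rface n T ?ys"
    unfolding rface_def
  proof (intro conjI allI impI)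
    show "2 \<le> length ?ys" by (rule V.len_ys)
    show "sorted_wrt (<) ?ys" by fact
    fix i assume "i + 1 < length ?ys" then show "side n T (?ys ! i) (?ys ! (i + 1))" using sides by blast
  next
    show "ray n T (last ?ys)" using V.last_ys N(3) by simp
    show "ray n T (hd ?ys)" using V.hd_ys r by simp
  next
    fix i j assume ij: "i + 1 < j \<and> j < length ?ys"
    show "\<not> chord n T (?ys ! i) (?ys ! j)"
    proof
      assume c: "chord n T (?ys ! i) (?ys ! j)"
      have "i < length ?ys" "j < length ?ys" using ij by auto
      then have "?ys ! i \<in> Vset a ?a' C" "?ys ! j \<in> Vset a ?a' C" using V.set_ys nth_mem by blast+
      then have "a \<le> ?ys ! i" "?ys ! j \<le> ?a'" using V.V_bounds by auto
      then have "(?ys ! i, ?ys ! j) \<in> C" using c unfolding C_def by simp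
      then show False using V.ys_nonconsec ij by blast
    qed
  next
    fix i assume i: "0 < i \<and> i + 1 < length ?ys"
    have "a < ?ys ! i" using sorted_nth_less[OF so, of 0 i] i h0 by simp
    moreover have "i < length ?ys - 1" using i by arith
    then have "?ys ! i < ?a'" using sorted_nth_less[OF so, of i "length ?ys - 1"] i hl by simp
    ultimately show "\<not> ray n T (?ys ! i)" using N(4) by blast
  qed
  have len: "length ?ys = m + 1" using faces[of "map Fin ?ys @ [Inf]"] is_face_rface[OF valid npos] rf by simp
  have law: "\<forall>s. s + 1 < length ?ys \<longrightarrow> WT (?ys ! (s + 1)) = WT (?ys ! s) - 1 + int m * int (K n T (?ys ! s) (?ys ! (s + 1)))"
  proof (intro allI impI)
    fix s assume s: "s + 1 < length ?ys"
    from V.ys_consec[OF s] show "WT (?ys ! (s + 1)) = WT (?ys ! s) - 1 + int m * int (K n T (?ys ! s) (?ys ! (s + 1)))"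
    proof
      assume "?ys ! (s + 1) = ?ys ! s + 1" then show ?thesis using WT_step by simp
    next
      assume "(?ys ! s, ?ys ! (s + 1)) \<in> C"
      then have "chord n T (?ys ! s) (?ys ! (s + 1))" unfolding C_def by auto
      then show ?thesis using chord_W(1) by blast
    qed
  qed
  note KK = rface_K[OF valid npos nc rf]
  have tel: "\<And>t. 1 \<le> t \<Longrightarrow> t < length ?ys \<Longrightarrow> WT (?ys ! t) = WT a - int t + int m"
    using telescope[of ?ys WT m n T, OF law KK(2)] KK(1) h0 by simp
  show W1: "WT ?a' = WT a" using tel[of m] len hl mpos by simp
  have Wge: "WT a \<le> WT (?ys ! t)" if t: "t < length ?ys" for t
  proof (cases "t = 0")
    case True then show ?thesis using h0 by simp
  next
    case False then show ?thesis using tel[of t] t len by simp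
  qed
  fix y assume y: "a \<le> y" "y \<le> ?a'"
  have cov: "(\<exists>t. t < length ?ys \<and> y = ?ys ! t) \<or> (\<exists>s. s + 1 < length ?ys \<and> ?ys ! s < y \<and> y < ?ys ! (s + 1))"
    using V.ys_cover[of y] y by simp
  from cov show "WT a \<le> WT y"
  proof (elim disjE exE conjE)
    fix t assume t: "t < length ?ys" "y = ?ys ! t"
    then show ?thesis using Wge by simp
  next
    fix s assume s: "s + 1 < length ?ys" "?ys ! s < y" "y < ?ys ! (s + 1)"
    then have "?ys ! (s + 1) \<noteq> ?ys ! s + 1" by simp
    then have "(?ys ! s, ?ys ! (s + 1)) \<in> C" using V.ys_consec[OF s(1)] by simp
    then have c: "chord n T (?ys ! s) (?ys ! (s + 1))" unfolding C_def by auto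
    have "WT (?ys ! (s + 1)) < WT y" using chord_W(2)[OF c] s by blast
    moreover have "WT a \<le> WT (?ys ! (s + 1))" using Wge s by simp
    ultimately show ?thesis by simp
  qed
qed

lemma rays_eq_aux: "\<forall>a b. nat (b - a) = N \<longrightarrow> ray n T a \<longrightarrow> ray n T b \<longrightarrow> a \<le> b \<longrightarrow> WT b = WT a"
proof (induction N rule: less_induct)
  case (less N)
  show ?case
  proof (intro allI impI)
    fix a b assume N: "nat (b - a) = N" and ra: "ray n T a" and rb: "ray n T b" and ab: "a \<le> b"
    show "WT b = WT a"
    proof (cases "a = b")
      case True then show ?thesis by simp
    next
      case False
      note X = nxt_props[OF ra]
      have "nxt a \<le> b"
      proof (rule ccontr)
        assume "\<not> nxt a \<le> b"
        then show False using X(4)[of b] rb ab False by simp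
      qed
      moreover have "nat (b - nxt a) < N" using N X(1) \<open>nxt a \<le> b\<close> by simp
      ultimately have "WT b = WT (nxt a)" using less.IH X(3) rb by blast
      then show ?thesis using ray_W(1)[OF ra] by simp
    qed
  qed
qed

lemma rays_eq: "ray n T a \<Longrightarrow> ray n T b \<Longrightarrow> a \<le> b \<Longrightarrow> WT b = WT a"
  using rays_eq_aux by blast

lemma fT_per: "fT (x + int n) = fT x"
  unfolding fT_def using cnt_shift[OF npos, of T x 1] by simp

lemma WT_n: "WT (int n) = 0"
proof -
  obtain i where pi: "Punct i \<in> T" using punct by blast
  then have "i < n" using valid unfolding validT_def valid_arc_def by force
  then have r: "ray n T (int i)" using ray_nat[OF npos] pi by blast
  then have r2: "ray n T (int i + int n)" using ray_shift[OF npos, of T "int i" 1] by simp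
  have "WT (int i + int n) = WT (int i)" using rays_eq[OF r r2] by simp
  moreover have "WT (int i + int n) - WT (int i) = WT (int n)"
    unfolding WT_def by (rule Wf_periodic) (rule fT_per)
  ultimately show ?thesis by simp
qed

lemma WT_per: "WT (x + int n) = WT x"
  using Wf_periodic[of fT n x, OF fT_per] WT_n unfolding WT_def by simp

lemma WT_shift: "WT (x + j * int n) = WT x"
proof (induction j rule: int_induct[where k = 0])
  case base then show ?case by simp
next
  case (step1 i)
  have "WT (x + (i + 1) * int n) = WT (x + i * int n + int n)" by (simp add: algebra_simps)
  then show ?case using WT_per step1 by simp
next
  case (step2 i)
  have "WT (x + i * int n) = WT (x + (i - 1) * int n + int n)" by (simp add: algebra_simps)
  then show ?case using WT_per step2 by simp
qed

lemma ray_min_aux: "\<forall>a y. nat (y - a) = N \<longrightarrow> ray n T a \<longrightarrow> a \<le> y \<longrightarrow> WT a \<le> WT y"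
proof (induction N rule: less_induct)
  case (less N)
  show ?case
  proof (intro allI impI)
    fix a y assume N: "nat (y - a) = N" and ra: "ray n T a" and ay: "a \<le> y"
    note X = nxt_props[OF ra]
    show "WT a \<le> WT y"
    proof (cases "y \<le> nxt a")
      case True then show ?thesis using ray_W(2)[OF ra] ay by simp
    next
      case False
      then have "nat (y - nxt a) < N" using N X(1) by simp
      then have "WT (nxt a) \<le> WT y" using less.IH X(3) False by simp
      then show ?thesis using ray_W(1)[OF ra] by simp
    qed
  qed
qed

lemma ray_min: "ray n T a \<Longrightarrow> WT a \<le> WT y"
proof -
  assume ra: "ray n T a"
  define j where "j = (a - y) div int n + 1"
  have "a - y < ((a - y) div int n + 1) * int n"
  proof -
    have e: "a - y = int n * ((a - y) div int n) + (a - y) mod int n" by simp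
    moreover have "(a - y) mod int n < int n" using npos by simp
    ultimately have "a - y < int n * ((a - y) div int n) + int n" by linarith
    then show ?thesis by (simp add: algebra_simps)
  qed
  then have "a \<le> y + j * int n" unfolding j_def by simp
  then have "WT a \<le> WT (y + j * int n)" using ray_min_aux ra by blast
  then show ?thesis using WT_shift by simp
qed

lemma cnt_mod: "cnt n T x = count (Phi T) (nat (x mod int n))"
proof -
  have i: "nat (x mod int n) < n" using npos by (simp add: nat_less_iff)
  have "count (Phi T) (nat (x mod int n)) = cnt n T (x mod int n)"
    using count_Phi_cnt[OF finT valid npos i] npos by simp
  also have "\<dots> = cnt n T x" using cnt_shift[OF npos, of T "x mod int n" "x div int n"] by simp
  finally show ?thesis by simp
qed

lemma card_T: "n = m * card T"
proof -
  have "WT (int n) = (\<Sum>p<n. fT (int p))" unfolding WT_def by (rule Wf_nat)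
  also have "\<dots> = (\<Sum>p<n. int m * int (count (Phi T) p) - 1)"
    by (rule sum.cong) (auto simp: fT_def count_Phi_cnt[OF finT valid npos])
  also have "\<dots> = int m * int (\<Sum>p<n. count (Phi T) p) - int n"
    by (simp add: sum_subtractf sum_distrib_left)
  also have "(\<Sum>p<n. count (Phi T) p) = card T"
    using size_sum_count[OF set_Phi[OF valid]] size_Phi by simp
  finally have "int m * int (card T) = int n" using WT_n by simp
  then show ?thesis by (metis of_nat_eq_iff of_nat_mult)
qed

lemma K_lt_cnt: "chord n T a b \<Longrightarrow> K n T a b < cnt n T a"
proof -
  assume c: "chord n T a b"
  have "{q. chord n T a q \<and> b < q} \<subset> {q. chord n T a q}" using c by auto
  then have "card {q. chord n T a q \<and> b < q} < card {q. chord n T a q}"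
    by (rule psubset_card_mono[OF finite_chords[OF valid npos]])
  then show ?thesis unfolding K_def cnt_def by simp
qed

lemma T_Psi: "T = psi.Psi n m (Phi T)"
proof -
  interpret P: psi n m "Phi T"
    by unfold_locales (use npos mpos set_Phi[OF valid] card_T size_Phi in auto)
  have c_eq: "P.c x = cnt n T x" for x unfolding P.c_def cnt_mod ..
  have f_eq: "P.f = fT" unfolding P.f_def fT_def c_eq by (rule refl)
  have W_eq: "P.W = WT" unfolding P.W_def WT_def f_eq ..
  have mW_eq: "WT a = P.mW" if "ray n T a" for a
  proof -
    obtain x0 where "P.W x0 = P.mW" using P.mW_ex by blast
    then show ?thesis using ray_min[OF that, of x0] P.mW_le[of a] W_eq by simp
  qed
  have sub: "T \<subseteq> P.Psi"
  proof
    fix \<alpha> assume a: "\<alpha> \<in> T"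
    show "\<alpha> \<in> P.Psi"
    proof (cases \<alpha>)
      case (Punct i)
      then have i: "i < n" using a valid unfolding validT_def valid_arc_def by auto
      then have "ray n T (int i)" using ray_nat[OF npos i] a Punct by simp
      then have "P.W (int i) = P.mW" using mW_eq W_eq by simp
      then have "ray n P.Psi (int i)" using P.ray_Psi by simp
      then show ?thesis using ray_nat[OF npos i] Punct by simp
    next
      case (Bdry i d)
      then have i: "i < n" "2 \<le> d" using a valid unfolding validT_def valid_arc_def by auto
      let ?b = "int i + int d"
      have ch: "chord n T (int i) ?b" using chord_nat[OF npos i(1)] a Bdry i by simp
      define k where "k = K n T (int i) ?b"
      have k1: "k < P.c (int i)" using K_lt_cnt[OF ch] c_eq unfolding k_def by simp
      have Wb: "WT ?b = WT (int i) - 1 + int m * int k" using chord_W(1)[OF ch] unfolding k_def .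
      have k2: "\<not> (k = 0 \<and> P.W (int i) = P.mW)"
      proof
        assume "k = 0 \<and> P.W (int i) = P.mW"
        then have "WT ?b < P.mW" using Wb W_eq by simp
        then show False using P.mW_le[of ?b] W_eq by simp
      qed
      have "P.fp (int i) k = ?b" unfolding P.fp_def
      proof (rule fpw_unique)
        show "int i < ?b" using i by simp
        show "P.W ?b \<le> P.tg (int i) k" unfolding P.tg_def using Wb W_eq by simp
        fix y assume "int i < y" "y < ?b"
        then show "P.tg (int i) k < P.W y" unfolding P.tg_def using chord_W(2)[OF ch] Wb W_eq by simp
      qed
      then have "chord n P.Psi (int i) ?b" unfolding P.chord_Psi using k1 k2 by metis
      then show ?thesis using chord_nat[OF npos i(1)] Bdry by simp
    qed
  qed
  have "card P.Psi = card T" using P.Phi_Psi size_Phi[of P.Psi] size_Phi[of T] by simp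
  then show ?thesis using card_subset_eq[OF P.finite_Psi sub] by simp
qed

end



lemma ang_of: "is_angulation m n T \<Longrightarrow> 0 < n \<Longrightarrow> 1 \<le> m \<Longrightarrow> ang n m T"
  unfolding is_angulation_def by unfold_locales (auto simp: validT_def)

lemma binom_arith:
  fixes m l n :: nat
  assumes "m \<ge> 1" and "l \<ge> 1" and "n = m * l"
  shows "m * ((n + l - 1) choose n) = (n + l - 1) choose l"
proof -
  define N where "N = n + l - 1"
  have n1: "n \<ge> 1" using assms by simp
  have a: "n * (N choose n) = N * ((N - 1) choose (n - 1))"
    using times_binomial_minus1_eq[of n N] n1 by simp
  have b: "l * (N choose l) = N * ((N - 1) choose (l - 1))"
    using times_binomial_minus1_eq[of l N] assms by simp
  have c: "(N - 1) choose (l - 1) = (N - 1) choose (n - 1)"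
    using binomial_symmetric[of "l - 1" "N - 1"] n1 assms unfolding N_def
    by (metis add_diff_cancel_left' add_diff_cancel_right' diff_diff_left le_add1 le_add_diff_inverse2
        add.commute le_diff_conv)
  have "l * (m * (N choose n)) = l * (N choose l)"
    using a b c assms by (simp add: mult.assoc mult.left_commute)
  then show ?thesis using assms unfolding N_def by simp
qed

theorem corollary3p6:
  fixes m l n :: nat
  assumes "m \<ge> 1" and "l \<ge> 1" and "n = m * l"
  shows "card {T. is_angulation m n T} = m * ((n + l - 1) choose n)
       \<and> card {T. is_angulation m n T} = (n + l - 1) choose l"
proof -
  have npos: "0 < n" using assms by simp
  have bij: "bij_betw Phi {T. is_angulation m n T} (multisets_of_size {..<n} l)"
  proof (rule bij_betw_imageI)
    show "inj_on Phi {T. is_angulation m n T}"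
    proof (rule inj_onI)
      fix T1 T2 assume t1: "T1 \<in> {T. is_angulation m n T}" and t2: "T2 \<in> {T. is_angulation m n T}"
        and e: "Phi T1 = Phi T2"
      interpret A1: ang n m T1 using ang_of t1 npos assms by auto
      interpret A2: ang n m T2 using ang_of t2 npos assms by auto
      show "T1 = T2" using A1.T_Psi A2.T_Psi e by metis
    qed
  next
    show "Phi ` {T. is_angulation m n T} = multisets_of_size {..<n} l"
    proof (intro equalityI subsetI)
      fix M assume "M \<in> Phi ` {T. is_angulation m n T}"
      then obtain T where T: "is_angulation m n T" "M = Phi T" by auto
      interpret A: ang n m T using ang_of T npos assms by auto
      have "card T = l" using A.card_T assms by simp
      then show "M \<in> multisets_of_size {..<n} l"
        unfolding multisets_of_size_def using T set_Phi[OF A.valid] size_Phi by auto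
    next
      fix M assume M: "M \<in> multisets_of_size {..<n} l"
      interpret P: psi n m M
        by unfold_locales (use npos assms M in \<open>auto simp: multisets_of_size_def\<close>)
      show "M \<in> Phi ` {T. is_angulation m n T}"
        using P.ang_Psi P.Phi_Psi by (metis (mono_tags, lifting) image_eqI mem_Collect_eq)
    qed
  qed
  have "card {T. is_angulation m n T} = (n + l - 1) choose l"
    using bij_betw_same_card[OF bij] card_multisets_of_size[of "{..<n}" l] by simp
  then show ?thesis using binom_arith[OF assms] by simp
qed


end
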